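(* Let $R$ be a ring, $I$ a non-empty countable set, $D=\{\delta_i\mid i\in I\}$ a family of derivations of $R$, $X=\{x_i\mid i\in I\}$ a set of distinct non-commuting indeterminates, and $S=R[X;D]$. For $J\subseteq I$ put $X_J=\{x_i\mid i\in J\}$, $D_J=\{\delta_i\mid i\in J\}$ and $S_J=R[X_J;D_J]$. Then for every $J\subseteq I$, $S_J$ is both a right corner and a left corner of $S$. In particular, if $S$ is left (respectively right) quasi-duo, then $S_J$ is left (respectively right) quasi-duo for every subset $J\subseteq I$.
   Context: All rings are unital and associative. A derivation of $R$ is an additive map $\delta:R\to R$ with $\delta(rs)=r\delta(s)+\delta(r)s$. The differential polynomial ring in several indeterminates $R[X;D]$ is the set of all (noncommutative) polynomials in the indeterminates $x_i\in X$ (i.e. finite $R$-linear combinations $a_1t_1+\cdots+a_nt_n$ of monomials $t_k$, finite words in the alphabet $X$, coefficients written on the left), with natural addition and multiplication generated by the commutation rules $x_ia=ax_i+\delta_i(a)$ for $a\in R$, $i\in I$ (the $\delta_i$ need not be distinct). A subring $B$ of a ring $A$ (unital, possibly with $1_B\neq 1_A$) is a left corner of $A$ if there is an additive subgroup $C$ of $A$ with $A=B\oplus C$ and $BC\subseteq C$; it is a right corner if instead $CB\subseteq C$. A ring is left (right) quasi-duo if every maximal left (right) ideal is two-sided. *)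

theory Defs
  imports "HOL-Algebra.Ideal" "HOL-Library.Countable_Set"
begin

definition is_derivation :: "('a::ring_1 \<Rightarrow> 'a) \<Rightarrow> bool" where
  "is_derivation d \<longleftrightarrow> (\<forall>a b. d (a + b) = d a + d b) \<and> (\<forall>a b. d (a * b) = a * d b + d a * b)"

text \<open>An element is a finitely supported function from monomials (words over the
index set, i.e. lists of indices) to coefficients: p t is the (left) coefficient of
the monomial t.  Indeterminate x_i corresponds to the word [i].\<close>

definition dp_supp :: "('i list \<Rightarrow> 'a::zero) \<Rightarrow> 'i list set" where
  "dp_supp p = {t. p t \<noteq> 0}"

definition dp_monom :: "'i list \<Rightarrow> 'a::zero \<Rightarrow> 'i list \<Rightarrow> 'a" where
  "dp_monom t a = (\<lambda>u. if u = t then a else 0)"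

text \<open>Left multiplication by x_i: x_i (b s) = b (x_i s) + delta_i(b) s.\<close>
definition dp_xmul :: "('i \<Rightarrow> 'a::ring_1 \<Rightarrow> 'a) \<Rightarrow> 'i \<Rightarrow> ('i list \<Rightarrow> 'a) \<Rightarrow> 'i list \<Rightarrow> 'a" where
  "dp_xmul \<delta> i p = (\<lambda>u. (case u of [] \<Rightarrow> 0 | j # s \<Rightarrow> if j = i then p s else 0) + \<delta> i (p u))"

text \<open>The product (word t) * (coefficient a), expanded via the commutation rules.\<close>
fun dp_wmulc :: "('i \<Rightarrow> 'a::ring_1 \<Rightarrow> 'a) \<Rightarrow> 'i list \<Rightarrow> 'a \<Rightarrow> 'i list \<Rightarrow> 'a" where
  "dp_wmulc \<delta> [] a = dp_monom [] a"
| "dp_wmulc \<delta> (i # t) a = dp_xmul \<delta> i (dp_wmulc \<delta> t a)"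

text \<open>Right multiplication by a word s (appending s to every monomial).\<close>
definition dp_rword :: "('i list \<Rightarrow> 'a::zero) \<Rightarrow> 'i list \<Rightarrow> 'i list \<Rightarrow> 'a" where
  "dp_rword p s = (\<lambda>u. if length s \<le> length u \<and> drop (length u - length s) u = s
                         then p (take (length u - length s) u) else 0)"

text \<open>(a t)(b s) = a (t b) s, extended bilinearly.\<close>
definition dp_mult :: "('i \<Rightarrow> 'a::ring_1 \<Rightarrow> 'a) \<Rightarrow> ('i list \<Rightarrow> 'a) \<Rightarrow> ('i list \<Rightarrow> 'a) \<Rightarrow> 'i list \<Rightarrow> 'a" where
  "dp_mult \<delta> p q = (\<lambda>u. \<Sum>t\<in>dp_supp p. \<Sum>s\<in>dp_supp q.
                          p t * dp_rword (dp_wmulc \<delta> t (q s)) s u)"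

definition diffpoly :: "'i set \<Rightarrow> ('i \<Rightarrow> 'a::ring_1 \<Rightarrow> 'a) \<Rightarrow> ('i list \<Rightarrow> 'a) ring" where
  "diffpoly J \<delta> =
     \<lparr> carrier = {p. finite (dp_supp p) \<and> (\<forall>t\<in>dp_supp p. set t \<subseteq> J)},
       monoid.mult = dp_mult \<delta>,
       one = dp_monom [] 1,
       zero = (\<lambda>_. 0),
       add = (\<lambda>p q u. p u + q u) \<rparr>"

text \<open>B is a subring of A, unital in its own right but possibly with a different unit.\<close>
definition subring_nu :: "('b, 'm) ring_scheme \<Rightarrow> ('b, 'n) ring_scheme \<Rightarrow> bool" where
  "subring_nu A B \<longleftrightarrow> ring B \<and> carrier B \<subseteq> carrier A \<and>
     (\<forall>x\<in>carrier B. \<forall>y\<in>carrier B. x \<otimes>\<^bsub>B\<^esub> y = x \<otimes>\<^bsub>A\<^esub> y \<and> x \<oplus>\<^bsub>B\<^esub> y = x \<oplus>\<^bsub>A\<^esub> y)"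

definition direct_complement :: "('b, 'm) ring_scheme \<Rightarrow> ('b, 'n) ring_scheme \<Rightarrow> 'b set \<Rightarrow> bool" where
  "direct_complement A B C \<longleftrightarrow> additive_subgroup C A \<and>
     carrier A = {b \<oplus>\<^bsub>A\<^esub> c | b c. b \<in> carrier B \<and> c \<in> C} \<and>
     carrier B \<inter> C = {\<zero>\<^bsub>A\<^esub>}"

definition left_corner :: "('b, 'm) ring_scheme \<Rightarrow> ('b, 'n) ring_scheme \<Rightarrow> bool" where
  "left_corner A B \<longleftrightarrow> subring_nu A B \<and>
     (\<exists>C. direct_complement A B C \<and> (\<forall>b\<in>carrier B. \<forall>c\<in>C. b \<otimes>\<^bsub>A\<^esub> c \<in> C))"

definition right_corner :: "('b, 'm) ring_scheme \<Rightarrow> ('b, 'n) ring_scheme \<Rightarrow> bool" where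
  "right_corner A B \<longleftrightarrow> subring_nu A B \<and>
     (\<exists>C. direct_complement A B C \<and> (\<forall>b\<in>carrier B. \<forall>c\<in>C. c \<otimes>\<^bsub>A\<^esub> b \<in> C))"

definition left_ideal :: "('b, 'm) ring_scheme \<Rightarrow> 'b set \<Rightarrow> bool" where
  "left_ideal R L \<longleftrightarrow> additive_subgroup L R \<and> (\<forall>r\<in>carrier R. \<forall>x\<in>L. r \<otimes>\<^bsub>R\<^esub> x \<in> L)"

definition right_ideal :: "('b, 'm) ring_scheme \<Rightarrow> 'b set \<Rightarrow> bool" where
  "right_ideal R L \<longleftrightarrow> additive_subgroup L R \<and> (\<forall>r\<in>carrier R. \<forall>x\<in>L. x \<otimes>\<^bsub>R\<^esub> r \<in> L)"

definition maximal_left_ideal :: "('b, 'm) ring_scheme \<Rightarrow> 'b set \<Rightarrow> bool" where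
  "maximal_left_ideal R L \<longleftrightarrow> left_ideal R L \<and> L \<noteq> carrier R \<and>
     (\<forall>M. left_ideal R M \<and> L \<subseteq> M \<longrightarrow> M = L \<or> M = carrier R)"

definition maximal_right_ideal :: "('b, 'm) ring_scheme \<Rightarrow> 'b set \<Rightarrow> bool" where
  "maximal_right_ideal R L \<longleftrightarrow> right_ideal R L \<and> L \<noteq> carrier R \<and>
     (\<forall>M. right_ideal R M \<and> L \<subseteq> M \<longrightarrow> M = L \<or> M = carrier R)"

definition left_quasi_duo :: "('b, 'm) ring_scheme \<Rightarrow> bool" where
  "left_quasi_duo R \<longleftrightarrow> (\<forall>L. maximal_left_ideal R L \<longrightarrow> right_ideal R L)"

definition right_quasi_duo :: "('b, 'm) ring_scheme \<Rightarrow> bool" where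
  "right_quasi_duo R \<longleftrightarrow> (\<forall>L. maximal_right_ideal R L \<longrightarrow> left_ideal R L)"

end

theory Submission
  imports Defs "HOL-Library.Function_Algebras"
begin


lemma der_add: "is_derivation d \<Longrightarrow> d (a + b) = d a + d b"
  by (simp add: is_derivation_def)
lemma der_mult: "is_derivation d \<Longrightarrow> d (a * b) = a * d b + d a * b"
  by (simp add: is_derivation_def)
lemma der_zero: "is_derivation d \<Longrightarrow> d 0 = 0"
  using der_add[of d 0 0] by simp
lemma der_uminus: "is_derivation d \<Longrightarrow> d (- a) = - d a"
proof -
  assume d: "is_derivation d"
  have "d a + d (-a) = 0" using der_add[OF d, of a "-a"] der_zero[OF d] by simp
  then show ?thesis by (simp add: eq_neg_iff_add_eq_0 add.commute)
qed
lemma der_diff: "is_derivation d \<Longrightarrow> d (a - b) = d a - d b"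
  using der_add[of d a "-b"] der_uminus[of d b] by simp
lemma der_one: "is_derivation d \<Longrightarrow> d (1::'a::ring_1) = 0"
  using der_mult[of d 1 1] by simp
lemma der_sum: "is_derivation d \<Longrightarrow> d (\<Sum>k\<in>F. g k) = (\<Sum>k\<in>F. d (g k))"
  by (induction F rule: infinite_finite_induct) (auto simp: der_zero der_add)

lemma fun_sum_apply: "(\<Sum>k\<in>F. g k) x = (\<Sum>k\<in>F. g k x)"
  by (induction F rule: infinite_finite_induct) auto

definition consR :: "'i \<Rightarrow> ('i list \<Rightarrow> 'a::zero) \<Rightarrow> 'i list \<Rightarrow> 'a" where
  "consR i f u = (case u of [] \<Rightarrow> 0 | j # v \<Rightarrow> if j = i then f v else 0)"

lemma consR_Nil[simp]: "consR i f [] = 0" by (simp add: consR_def)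
lemma consR_Cons[simp]: "consR i f (j # v) = (if j = i then f v else 0)" by (simp add: consR_def)

lemma consR_add: "consR i (f + g) = consR i f + consR i (g::_\<Rightarrow>'a::ring_1)"
  by (rule ext) (simp add: consR_def split: list.split)
lemma consR_diff: "consR i (f - g) = consR i f - consR i (g::_\<Rightarrow>'a::ring_1)"
  by (rule ext) (simp add: consR_def split: list.split)
lemma consR_zero: "consR i (0::_\<Rightarrow>'a::ring_1) = 0"
  by (rule ext) (simp add: consR_def split: list.split)
lemma consR_sum: "consR i (\<Sum>k\<in>F. g k) = (\<Sum>k\<in>F. consR i (g k :: _ \<Rightarrow> 'a::ring_1))"
proof (induction F rule: infinite_finite_induct)
  case (insert x F)
  have "consR i (sum g (insert x F)) = consR i (g x + sum g F)" by (subst sum.insert[OF insert.hyps]) (rule refl)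
  also have "\<dots> = consR i (g x) + consR i (sum g F)" by (rule consR_add)
  also have "\<dots> = consR i (g x) + (\<Sum>k\<in>F. consR i (g k))" using insert.IH by (simp only:)
  finally show ?case by (subst sum.insert[OF insert.hyps])
next
  case (infinite A) then show ?case by (metis consR_zero sum.infinite)
qed (metis consR_zero sum.empty)

lemma xmul_eq: "dp_xmul \<delta> i p = consR i p + (\<delta> i \<circ> p)"
  by (rule ext) (simp add: dp_xmul_def consR_def)

definition dK :: "('i \<Rightarrow> 'a::ring_1 \<Rightarrow> 'a) \<Rightarrow> 'i set \<Rightarrow> bool" where
  "dK \<delta> K \<longleftrightarrow> (\<forall>i\<in>K. is_derivation (\<delta> i))"

definition smult :: "'a::times \<Rightarrow> ('b \<Rightarrow> 'a) \<Rightarrow> 'b \<Rightarrow> 'a" where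
  "smult a f = (\<lambda>u. a * f u)"

lemma xmul_add: "is_derivation (\<delta> i) \<Longrightarrow> dp_xmul \<delta> i (f + g) = dp_xmul \<delta> i f + dp_xmul \<delta> i g"
  by (rule ext) (simp add: dp_xmul_def der_add split: list.split)
lemma xmul_zero: "is_derivation (\<delta> i) \<Longrightarrow> dp_xmul \<delta> i 0 = 0"
  by (rule ext) (simp add: dp_xmul_def der_zero split: list.split)
lemma xmul_uminus: "is_derivation (\<delta> i) \<Longrightarrow> dp_xmul \<delta> i (- f) = - dp_xmul \<delta> i f"
  by (rule ext) (simp add: dp_xmul_def der_uminus split: list.split)
lemma xmul_diff: "is_derivation (\<delta> i) \<Longrightarrow> dp_xmul \<delta> i (f - g) = dp_xmul \<delta> i f - dp_xmul \<delta> i g"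
  by (rule ext) (simp add: dp_xmul_def der_diff split: list.split)
lemma xmul_sum: "is_derivation (\<delta> i) \<Longrightarrow> dp_xmul \<delta> i (\<Sum>k\<in>F. g k) = (\<Sum>k\<in>F. dp_xmul \<delta> i (g k))"
  by (induction F rule: infinite_finite_induct) (auto simp: xmul_zero xmul_add)
lemma xmul_smult: "is_derivation (\<delta> i) \<Longrightarrow>
   dp_xmul \<delta> i (smult b f) = smult b (dp_xmul \<delta> i f) + smult (\<delta> i b) f"
  by (rule ext) (simp add: dp_xmul_def smult_def der_mult algebra_simps split: list.split)

fun Xw :: "('i \<Rightarrow> 'a::ring_1 \<Rightarrow> 'a) \<Rightarrow> 'i list \<Rightarrow> ('i list \<Rightarrow> 'a) \<Rightarrow> 'i list \<Rightarrow> 'a" where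
  "Xw \<delta> [] f = f"
| "Xw \<delta> (i # t) f = dp_xmul \<delta> i (Xw \<delta> t f)"

lemma Xw_add: "dK \<delta> K \<Longrightarrow> set t \<subseteq> K \<Longrightarrow> Xw \<delta> t (f + g) = Xw \<delta> t f + Xw \<delta> t g"
  by (induction t) (auto simp: dK_def xmul_add)
lemma Xw_zero: "dK \<delta> K \<Longrightarrow> set t \<subseteq> K \<Longrightarrow> Xw \<delta> t 0 = 0"
  by (induction t) (auto simp: dK_def xmul_zero)
lemma Xw_uminus: "dK \<delta> K \<Longrightarrow> set t \<subseteq> K \<Longrightarrow> Xw \<delta> t (- f) = - Xw \<delta> t f"
  by (induction t) (auto simp: dK_def xmul_uminus)
lemma Xw_diff: "dK \<delta> K \<Longrightarrow> set t \<subseteq> K \<Longrightarrow> Xw \<delta> t (f - g) = Xw \<delta> t f - Xw \<delta> t g"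
  by (induction t) (auto simp: dK_def xmul_diff)
lemma Xw_sum: "dK \<delta> K \<Longrightarrow> set t \<subseteq> K \<Longrightarrow> Xw \<delta> t (\<Sum>k\<in>F. g k) = (\<Sum>k\<in>F. Xw \<delta> t (g k))"
  by (induction F rule: infinite_finite_induct) (auto simp: Xw_zero Xw_add)

lemma supp_iff: "t \<in> dp_supp p \<longleftrightarrow> p t \<noteq> 0" by (simp add: dp_supp_def)

lemma supp_add: "dp_supp (f + g) \<subseteq> dp_supp f \<union> dp_supp (g :: _ \<Rightarrow> 'a::ring_1)"
  by (auto simp: dp_supp_def)
lemma supp_uminus: "dp_supp (- f) = dp_supp (f :: _ \<Rightarrow> 'a::ring_1)"
  by (auto simp: dp_supp_def)
lemma supp_diff: "dp_supp (f - g) \<subseteq> dp_supp f \<union> dp_supp (g :: _ \<Rightarrow> 'a::ring_1)"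
  by (auto simp: dp_supp_def)
lemma supp_sum: "dp_supp (\<Sum>k\<in>F. (g k :: _ \<Rightarrow> 'a::ring_1)) \<subseteq> (\<Union>k\<in>F. dp_supp (g k))"
proof (induction F rule: infinite_finite_induct)
  case (insert x F)
  have "dp_supp (sum g (insert x F)) = dp_supp (g x + sum g F)" using insert.hyps by simp
  then show ?case using supp_add[of "g x" "sum g F"] insert.IH by blast
qed (auto simp: dp_supp_def)
lemma supp_smult: "dp_supp (smult a f) \<subseteq> dp_supp (f :: _ \<Rightarrow> 'a::ring_1)"
  by (auto simp: dp_supp_def smult_def)
lemma supp_consR: "dp_supp (consR i f) = Cons i ` dp_supp f"
proof (rule Set.set_eqI)
  fix x show "x \<in> dp_supp (consR i f) \<longleftrightarrow> x \<in> Cons i ` dp_supp f"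
    by (cases x) (auto simp: dp_supp_def)
qed
lemma supp_xmul: "is_derivation (\<delta> i) \<Longrightarrow> dp_supp (dp_xmul \<delta> i f) \<subseteq> dp_supp f \<union> Cons i ` dp_supp f"
proof
  fix x assume d: "is_derivation (\<delta> i)" and x: "x \<in> dp_supp (dp_xmul \<delta> i f)"
  show "x \<in> dp_supp f \<union> Cons i ` dp_supp f"
  proof (cases "f x = 0")
    case True
    then have "consR i f x \<noteq> 0" using x d by (simp add: xmul_eq dp_supp_def der_zero)
    then show ?thesis using supp_consR[of i f] by (auto simp: dp_supp_def)
  qed (simp add: dp_supp_def)
qed

lemma supp_Xw_W: assumes "dK \<delta> K" "set t \<subseteq> K" "dp_supp f \<subseteq> W" "\<And>i w. i \<in> set t \<Longrightarrow> w \<in> W \<Longrightarrow> i # w \<in> W"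
  shows "dp_supp (Xw \<delta> t f) \<subseteq> W"
  using assms
proof (induction t)
  case (Cons i t)
  then have "dp_supp (Xw \<delta> t f) \<subseteq> W" by auto
  moreover have "is_derivation (\<delta> i)" using Cons by (auto simp: dK_def)
  moreover have "Cons i ` dp_supp (Xw \<delta> t f) \<subseteq> W" using Cons.prems(4) calculation(1) by auto
  ultimately have "dp_supp (dp_xmul \<delta> i (Xw \<delta> t f)) \<subseteq> W" using supp_xmul[of \<delta> i "Xw \<delta> t f"] by blast
  then show ?case by simp
qed simp

lemma finite_supp_Xw: assumes "dK \<delta> K" "set t \<subseteq> K" "finite (dp_supp f)"
  shows "finite (dp_supp (Xw \<delta> t f))"
  using assms
proof (induction t)
  case (Cons i t)
  then have "finite (dp_supp (Xw \<delta> t f))" by auto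
  moreover have "is_derivation (\<delta> i)" using Cons by (auto simp: dK_def)
  ultimately show ?case using supp_xmul[of \<delta> i "Xw \<delta> t f"] by (auto intro: finite_subset)
qed simp


definition cK :: "'i set \<Rightarrow> ('i list \<Rightarrow> 'a::zero) \<Rightarrow> bool" where
  "cK K p \<longleftrightarrow> finite (dp_supp p) \<and> (\<forall>t\<in>dp_supp p. set t \<subseteq> K)"

lemma carrier_diffpoly: "carrier (diffpoly K \<delta>) = {p. cK K p}"
  by (simp add: diffpoly_def cK_def)

lemma rword_app: "dp_rword p s (v @ s) = p v"
  by (simp add: dp_rword_def)

lemma rword_not: "\<not> (\<exists>v. u = v @ s) \<Longrightarrow> dp_rword p s u = 0"
  unfolding dp_rword_def
  by (metis append_take_drop_id)

lemma xmul_rword: assumes d: "is_derivation (\<delta> i)"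
  shows "dp_xmul \<delta> i (dp_rword q s) = dp_rword (dp_xmul \<delta> i q) s"
proof (rule ext)
  fix u
  show "dp_xmul \<delta> i (dp_rword q s) u = dp_rword (dp_xmul \<delta> i q) s u"
  proof (cases "\<exists>v. u = v @ s")
    case True
    then obtain v where u: "u = v @ s" by blast
    have c: "consR i (dp_rword q s) (v @ s) = consR i q v"
    proof (cases v)
      case Nil
      show ?thesis
      proof (cases s)
        case (Cons j s')
        have "\<not> (\<exists>w. s' = w @ s)"
        proof
          assume "\<exists>w. s' = w @ s"
          then obtain w where "s' = w @ s" by blast
          then have "length s' \<ge> length s" by simp
          then show False using Cons by simp
        qed
        then show ?thesis using Nil Cons by (simp add: rword_not)
      qed (simp add: Nil)
    next
      case (Cons j v')
      then show ?thesis by (simp add: rword_app)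
    qed
    show ?thesis using c by (simp add: u xmul_eq rword_app)
  next
    case False
    have "consR i (dp_rword q s) u = 0"
    proof (cases u)
      case (Cons j u')
      have "\<not> (\<exists>w. u' = w @ s)"
      proof
        assume "\<exists>w. u' = w @ s"
        then obtain w where "u' = w @ s" by blast
        then have "u = (j # w) @ s" by (simp add: Cons)
        then show False using False by blast
      qed
      then show ?thesis using Cons by (simp add: rword_not)
    qed simp
    then show ?thesis using False by (simp add: xmul_eq rword_not der_zero[OF d])
  qed
qed

lemma monom_rword: "dp_monom s b = dp_rword (dp_monom [] b) s"
proof (rule ext)
  fix u show "dp_monom s b u = dp_rword (dp_monom [] b) s u"
  proof (cases "\<exists>v. u = v @ s")
    case True
    then obtain v where "u = v @ s" by blast
    then show ?thesis by (simp add: rword_app dp_monom_def)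
  next
    case False
    then have "u \<noteq> s" by (metis append_Nil)
    then show ?thesis using False by (simp add: rword_not dp_monom_def)
  qed
qed

lemma Xw_monom: "dK \<delta> K \<Longrightarrow> set t \<subseteq> K \<Longrightarrow> Xw \<delta> t (dp_monom s b) = dp_rword (dp_wmulc \<delta> t b) s"
proof (induction t)
  case Nil then show ?case by (simp only: Xw.simps dp_wmulc.simps) (rule monom_rword)
next
  case (Cons i t)
  then show ?case by (simp add: xmul_rword dK_def)
qed

lemma monom_decomp: "finite (dp_supp (r::_\<Rightarrow>'a::ring_1)) \<Longrightarrow> r = (\<Sum>s\<in>dp_supp r. dp_monom s (r s))"
proof (rule ext)
  fix u assume f: "finite (dp_supp r)"
  have "(\<Sum>s\<in>dp_supp r. dp_monom s (r s)) u = (\<Sum>s\<in>dp_supp r. if u = s then r s else 0)"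
    by (simp add: fun_sum_apply dp_monom_def)
  also have "\<dots> = r u" using f by (simp add: sum.delta dp_supp_def)
  finally show "r u = (\<Sum>s\<in>dp_supp r. dp_monom s (r s)) u" by simp
qed

definition Phi :: "('i \<Rightarrow> 'a::ring_1 \<Rightarrow> 'a) \<Rightarrow> ('i list \<Rightarrow> 'a) \<Rightarrow> ('i list \<Rightarrow> 'a) \<Rightarrow> 'i list \<Rightarrow> 'a" where
  "Phi \<delta> p r = (\<Sum>t\<in>dp_supp p. smult (p t) (Xw \<delta> t r))"

lemma smult_sum: "smult a (\<Sum>k\<in>F. g k) = (\<Sum>k\<in>F. smult a (g k :: _ \<Rightarrow> 'a::ring_1))"
  by (rule ext) (simp add: smult_def fun_sum_apply sum_distrib_left)
lemma smult_add: "smult a (f + g) = smult a f + smult a (g :: _ \<Rightarrow> 'a::ring_1)"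
  by (rule ext) (simp add: smult_def algebra_simps)
lemma smult_add2: "smult (a + b) f = smult a f + smult b (f :: _ \<Rightarrow> 'a::ring_1)"
  by (rule ext) (simp add: smult_def algebra_simps)
lemma smult_zero: "smult 0 f = (0 :: _ \<Rightarrow> 'a::ring_1)"
  by (rule ext) (simp add: smult_def)
lemma smult_zero2: "smult a 0 = (0 :: _ \<Rightarrow> 'a::ring_1)"
  by (rule ext) (simp add: smult_def)
lemma smult_one: "smult 1 f = (f :: _ \<Rightarrow> 'a::ring_1)"
  by (rule ext) (simp add: smult_def)
lemma smult_smult: "smult a (smult b f) = smult (a * b) (f :: _ \<Rightarrow> 'a::ring_1)"
  by (rule ext) (simp add: smult_def mult.assoc)

lemma mult_eq_Phi:
  assumes "dK \<delta> K" "cK K p" "finite (dp_supp r)"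
  shows "dp_mult \<delta> p r = Phi \<delta> p r"
proof (rule ext)
  fix u
  have "Phi \<delta> p r u = (\<Sum>t\<in>dp_supp p. p t * Xw \<delta> t r u)"
    by (simp add: Phi_def fun_sum_apply smult_def)
  also have "\<dots> = (\<Sum>t\<in>dp_supp p. p t * (\<Sum>s\<in>dp_supp r. dp_rword (dp_wmulc \<delta> t (r s)) s u))"
  proof (rule sum.cong[OF refl])
    fix t assume t: "t \<in> dp_supp p"
    then have tK: "set t \<subseteq> K" using assms(2) by (auto simp: cK_def)
    have "Xw \<delta> t r = Xw \<delta> t (\<Sum>s\<in>dp_supp r. dp_monom s (r s))"
      using monom_decomp[OF assms(3)] by simp
    also have "\<dots> = (\<Sum>s\<in>dp_supp r. dp_rword (dp_wmulc \<delta> t (r s)) s)"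
      by (simp add: Xw_sum[OF assms(1) tK] Xw_monom[OF assms(1) tK])
    finally show "p t * Xw \<delta> t r u = p t * (\<Sum>s\<in>dp_supp r. dp_rword (dp_wmulc \<delta> t (r s)) s u)"
      by (simp add: fun_sum_apply)
  qed
  also have "\<dots> = dp_mult \<delta> p r u"
    by (simp add: dp_mult_def sum_distrib_left)
  finally show "dp_mult \<delta> p r u = Phi \<delta> p r u" by simp
qed

lemma Phi_superset: assumes "finite F" "dp_supp p \<subseteq> F"
  shows "Phi \<delta> p r = (\<Sum>t\<in>F. smult (p t) (Xw \<delta> t r))"
  unfolding Phi_def
  by (rule sum.mono_neutral_left[OF assms]) (auto simp: dp_supp_def smult_zero)

lemma Phi_add: assumes "finite (dp_supp p)" "finite (dp_supp q)"
  shows "Phi \<delta> (p + q) r = Phi \<delta> p r + Phi \<delta> q r"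
proof -
  let ?F = "dp_supp p \<union> dp_supp q"
  have "Phi \<delta> (p + q) r = (\<Sum>t\<in>?F. smult ((p + q) t) (Xw \<delta> t r))"
    by (rule Phi_superset) (use assms supp_add[of p q] in auto)
  also have "\<dots> = (\<Sum>t\<in>?F. smult (p t) (Xw \<delta> t r)) + (\<Sum>t\<in>?F. smult (q t) (Xw \<delta> t r))"
    by (simp add: smult_add2 sum.distrib)
  also have "\<dots> = Phi \<delta> p r + Phi \<delta> q r"
  proof -
    have "Phi \<delta> p r = (\<Sum>t\<in>?F. smult (p t) (Xw \<delta> t r))" by (rule Phi_superset) (use assms in auto)
    moreover have "Phi \<delta> q r = (\<Sum>t\<in>?F. smult (q t) (Xw \<delta> t r))" by (rule Phi_superset) (use assms in auto)
    ultimately show ?thesis by simp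
  qed
  finally show ?thesis .
qed

lemma Phi_zero: "Phi \<delta> 0 r = 0"
  by (simp add: Phi_def dp_supp_def)

lemma Phi_smult: assumes "finite (dp_supp p)"
  shows "Phi \<delta> (smult a p) r = smult a (Phi \<delta> p r)"
proof -
  have "Phi \<delta> (smult a p) r = (\<Sum>t\<in>dp_supp p. smult (smult a p t) (Xw \<delta> t r))"
    by (rule Phi_superset) (use assms supp_smult[of a p] in auto)
  also have "\<dots> = smult a (Phi \<delta> p r)"
    by (simp add: Phi_def smult_sum smult_smult) (simp add: smult_def)
  finally show ?thesis .
qed

lemma Phi_sum: assumes "\<And>k. k \<in> F \<Longrightarrow> finite (dp_supp (g k))"
  shows "Phi \<delta> (\<Sum>k\<in>F. g k) r = (\<Sum>k\<in>F. Phi \<delta> (g k) r)"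
  using assms
proof (induction F rule: infinite_finite_induct)
  case (insert x F)
  have fin: "finite (dp_supp (sum g F))"
    by (rule finite_subset[OF supp_sum]) (use insert in auto)
  have "Phi \<delta> (sum g (insert x F)) r = Phi \<delta> (g x + sum g F) r"
    by (subst sum.insert[OF insert.hyps]) (rule refl)
  also have "\<dots> = Phi \<delta> (g x) r + Phi \<delta> (sum g F) r"
    by (rule Phi_add) (use insert fin in auto)
  finally show ?case using insert by (subst sum.insert[OF insert.hyps]) auto
next
  case (infinite A) then show ?case by (metis Phi_zero sum.infinite)
qed (metis Phi_zero sum.empty)

lemma Phi_consR: assumes "finite (dp_supp f)"
  shows "Phi \<delta> (consR i f) r = (\<Sum>s\<in>dp_supp f. smult (f s) (Xw \<delta> (i # s) r))"
proof -
  have "Phi \<delta> (consR i f) r = (\<Sum>t\<in>Cons i ` dp_supp f. smult (consR i f t) (Xw \<delta> t r))"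
    by (simp add: Phi_def supp_consR)
  also have "\<dots> = (\<Sum>s\<in>dp_supp f. smult (f s) (Xw \<delta> (i # s) r))"
    by (subst sum.reindex) (auto simp: inj_on_def)
  finally show ?thesis .
qed

lemma Phi_comp: assumes "is_derivation (\<delta> i)" "finite (dp_supp f)"
  shows "Phi \<delta> (\<delta> i \<circ> f) r = (\<Sum>s\<in>dp_supp f. smult (\<delta> i (f s)) (Xw \<delta> s r))"
  by (subst Phi_superset[OF assms(2)]) (auto simp: dp_supp_def der_zero[OF assms(1)])

lemma Phi_xmul: assumes "is_derivation (\<delta> i)" "finite (dp_supp f)"
  shows "Phi \<delta> (dp_xmul \<delta> i f) r = dp_xmul \<delta> i (Phi \<delta> f r)"
proof -
  have f1: "finite (dp_supp (consR i f))" using assms(2) by (simp add: supp_consR)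
  have f2: "finite (dp_supp (\<delta> i \<circ> f))"
    by (rule finite_subset[OF _ assms(2)]) (auto simp: dp_supp_def der_zero[OF assms(1)])
  have "Phi \<delta> (dp_xmul \<delta> i f) r = Phi \<delta> (consR i f) r + Phi \<delta> (\<delta> i \<circ> f) r"
    by (simp add: xmul_eq Phi_add[OF f1 f2])
  also have "\<dots> = (\<Sum>s\<in>dp_supp f. smult (f s) (dp_xmul \<delta> i (Xw \<delta> s r)) + smult (\<delta> i (f s)) (Xw \<delta> s r))"
    by (simp add: Phi_consR[OF assms(2)] Phi_comp[of \<delta> i, OF assms] sum.distrib)
  also have "\<dots> = (\<Sum>s\<in>dp_supp f. dp_xmul \<delta> i (smult (f s) (Xw \<delta> s r)))"
    by (simp add: xmul_smult[of \<delta> i, OF assms(1)])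
  also have "\<dots> = dp_xmul \<delta> i (Phi \<delta> f r)"
    by (simp add: Phi_def xmul_sum[of \<delta> i, OF assms(1)])
  finally show ?thesis .
qed

lemma Phi_Xw: assumes "dK \<delta> K" "set t \<subseteq> K" "finite (dp_supp q)"
  shows "Phi \<delta> (Xw \<delta> t q) r = Xw \<delta> t (Phi \<delta> q r)"
  using assms
proof (induction t)
  case (Cons i t)
  have d: "is_derivation (\<delta> i)" using Cons by (auto simp: dK_def)
  have "finite (dp_supp (Xw \<delta> t q))" using finite_supp_Xw Cons by auto
  then show ?case using Cons by (simp add: Phi_xmul[of \<delta> i, OF d])
qed simp

lemma Phi_assoc: assumes "dK \<delta> K" "cK K p" "finite (dp_supp q)"
  shows "Phi \<delta> (Phi \<delta> p q) r = Phi \<delta> p (Phi \<delta> q r)"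
proof -
  have fin: "\<And>t. t \<in> dp_supp p \<Longrightarrow> finite (dp_supp (smult (p t) (Xw \<delta> t q)))"
    using assms by (auto intro!: finite_subset[OF supp_smult] finite_supp_Xw simp: cK_def)
  have "Phi \<delta> (Phi \<delta> p q) r = (\<Sum>t\<in>dp_supp p. Phi \<delta> (smult (p t) (Xw \<delta> t q)) r)"
    unfolding Phi_def[of \<delta> p q] by (rule Phi_sum[OF fin])
  also have "\<dots> = (\<Sum>t\<in>dp_supp p. smult (p t) (Xw \<delta> t (Phi \<delta> q r)))"
  proof (rule sum.cong[OF refl])
    fix t assume t: "t \<in> dp_supp p"
    then have tK: "set t \<subseteq> K" using assms(2) by (auto simp: cK_def)
    have f: "finite (dp_supp (Xw \<delta> t q))" using finite_supp_Xw[OF assms(1) tK assms(3)] .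
    show "Phi \<delta> (smult (p t) (Xw \<delta> t q)) r = smult (p t) (Xw \<delta> t (Phi \<delta> q r))"
      by (simp add: Phi_smult[OF f] Phi_Xw[OF assms(1) tK assms(3)])
  qed
  also have "\<dots> = Phi \<delta> p (Phi \<delta> q r)" by (simp add: Phi_def)
  finally show ?thesis .
qed

lemma supp_Phi: "dp_supp (Phi \<delta> p q) \<subseteq> (\<Union>t\<in>dp_supp p. dp_supp (Xw \<delta> t q))"
  unfolding Phi_def using supp_sum supp_smult by fastforce

lemma Phi_one_left: "Phi \<delta> (dp_monom [] 1) r = r"
proof -
  have "Phi \<delta> (dp_monom [] 1) r = (\<Sum>t\<in>{[]}. smult (dp_monom [] 1 t) (Xw \<delta> t r))"
    by (rule Phi_superset) (auto simp: dp_supp_def dp_monom_def)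
  then show ?thesis by (simp add: dp_monom_def smult_one)
qed

lemma xmul_monom1: "is_derivation (\<delta> i) \<Longrightarrow> dp_xmul \<delta> i (dp_monom t 1) = dp_monom (i # t) 1"
  by (rule ext) (auto simp: dp_xmul_def dp_monom_def der_one der_zero split: list.split)

lemma Xw_monom1: "dK \<delta> K \<Longrightarrow> set t \<subseteq> K \<Longrightarrow> Xw \<delta> t (dp_monom [] 1) = dp_monom t 1"
  by (induction t) (auto simp: dK_def xmul_monom1)

lemma Phi_one_right: assumes "dK \<delta> K" "cK K p"
  shows "Phi \<delta> p (dp_monom [] 1) = p"
proof -
  have "Phi \<delta> p (dp_monom [] 1) = (\<Sum>t\<in>dp_supp p. dp_monom t (p t))"
    unfolding Phi_def
  proof (rule sum.cong[OF refl])
    fix t assume "t \<in> dp_supp p"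
    then have "set t \<subseteq> K" using assms by (auto simp: cK_def)
    then show "smult (p t) (Xw \<delta> t (dp_monom [] 1)) = dp_monom t (p t)"
      using Xw_monom1[OF assms(1)] by (auto simp: smult_def dp_monom_def)
  qed
  also have "\<dots> = p" using monom_decomp[of p] assms(2) by (simp add: cK_def)
  finally show ?thesis .
qed


lemma cK_add: "cK K p \<Longrightarrow> cK K q \<Longrightarrow> cK K (p + (q::_\<Rightarrow>'a::ring_1))"
  unfolding cK_def using supp_add[of p q] by (auto intro: finite_subset)
lemma cK_uminus: "cK K p \<Longrightarrow> cK K (- (p::_\<Rightarrow>'a::ring_1))"
  unfolding cK_def by (simp add: supp_uminus)
lemma cK_diff: "cK K p \<Longrightarrow> cK K q \<Longrightarrow> cK K (p - (q::_\<Rightarrow>'a::ring_1))"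
  using cK_add[of K p "-q"] cK_uminus[of K q] by simp
lemma cK_zero: "cK K (0::_\<Rightarrow>'a::ring_1)"
  by (simp add: cK_def dp_supp_def)
lemma cK_monom: "set t \<subseteq> K \<Longrightarrow> cK K (dp_monom t (a::'a::ring_1))"
  by (auto simp: cK_def dp_supp_def dp_monom_def)
lemma cK_smult: "cK K p \<Longrightarrow> cK K (smult a (p::_\<Rightarrow>'a::ring_1))"
  unfolding cK_def using supp_smult[of a p] by (auto intro: finite_subset)
lemma cK_sum: "(\<And>k. k \<in> F \<Longrightarrow> cK K (g k)) \<Longrightarrow> cK K (\<Sum>k\<in>F. (g k :: _ \<Rightarrow> 'a::ring_1))"
  by (induction F rule: infinite_finite_induct) (auto simp: cK_zero cK_add)

lemma cK_Xw: assumes "dK \<delta> K" "set t \<subseteq> K" "cK K q" shows "cK K (Xw \<delta> t q)"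
proof -
  have "dp_supp (Xw \<delta> t q) \<subseteq> {w. set w \<subseteq> K}"
    by (rule supp_Xw_W[OF assms(1,2)]) (use assms in \<open>auto simp: cK_def\<close>)
  then show ?thesis using finite_supp_Xw[OF assms(1,2)] assms(3) by (auto simp: cK_def)
qed

lemma cK_Phi: assumes "dK \<delta> K" "cK K p" "cK K q" shows "cK K (Phi \<delta> p q)"
  unfolding Phi_def
  by (rule cK_sum, rule cK_smult, rule cK_Xw[OF assms(1) _ assms(3)]) (use assms(2) in \<open>auto simp: cK_def\<close>)

lemma dp_mult_Phi: "dK \<delta> K \<Longrightarrow> cK K p \<Longrightarrow> cK K q \<Longrightarrow> dp_mult \<delta> p q = Phi \<delta> p q"
  by (rule mult_eq_Phi) (auto simp: cK_def)

lemma add_fun_eq: "(\<lambda>u. p u + q u) = p + q"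
  by (rule ext) simp

lemma Phi_add_right: assumes "dK \<delta> K" "cK K p"
  shows "Phi \<delta> p (q + r) = Phi \<delta> p q + Phi \<delta> p r"
proof -
  have "Phi \<delta> p (q + r) = (\<Sum>t\<in>dp_supp p. smult (p t) (Xw \<delta> t q) + smult (p t) (Xw \<delta> t r))"
    unfolding Phi_def
  proof (rule sum.cong[OF refl])
    fix t assume "t \<in> dp_supp p"
    then have "set t \<subseteq> K" using assms(2) by (auto simp: cK_def)
    then show "smult (p t) (Xw \<delta> t (q + r)) = smult (p t) (Xw \<delta> t q) + smult (p t) (Xw \<delta> t r)"
      by (simp add: Xw_add[OF assms(1)] smult_add)
  qed
  then show ?thesis by (simp add: sum.distrib Phi_def)
qed

lemma dp_add: "(x :: _ \<Rightarrow> 'a::ring_1) \<oplus>\<^bsub>diffpoly K \<delta>\<^esub> y = x + y"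
  unfolding diffpoly_def plus_fun_def by simp
lemma dp_zero: "\<zero>\<^bsub>diffpoly K (\<delta> :: _ \<Rightarrow> 'a::ring_1 \<Rightarrow> _)\<^esub> = 0"
  unfolding diffpoly_def zero_fun_def by simp
lemma dp_one: "\<one>\<^bsub>diffpoly K (\<delta> :: _ \<Rightarrow> 'a::ring_1 \<Rightarrow> _)\<^esub> = dp_monom [] 1"
  unfolding diffpoly_def by simp
lemma dp_mul: "x \<otimes>\<^bsub>diffpoly K \<delta>\<^esub> y = dp_mult \<delta> x y"
  unfolding diffpoly_def by simp

lemma ring_diffpoly: fixes \<delta> :: "'i \<Rightarrow> 'a::ring_1 \<Rightarrow> 'a" assumes d: "dK \<delta> K" shows "ring (diffpoly K \<delta>)"
proof (rule ringI)
  show "abelian_group (diffpoly K \<delta>)"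
  proof (rule abelian_groupI)
    fix x y assume "x \<in> carrier (diffpoly K \<delta>)" "y \<in> carrier (diffpoly K \<delta>)"
    then show "x \<oplus>\<^bsub>diffpoly K \<delta>\<^esub> y \<in> carrier (diffpoly K \<delta>)"
      by (simp only: carrier_diffpoly dp_add mem_Collect_eq cK_add)
  next
    show "\<zero>\<^bsub>diffpoly K \<delta>\<^esub> \<in> carrier (diffpoly K \<delta>)"
      by (simp only: carrier_diffpoly dp_zero mem_Collect_eq cK_zero)
  next
    fix x y z show "x \<oplus>\<^bsub>diffpoly K \<delta>\<^esub> y \<oplus>\<^bsub>diffpoly K \<delta>\<^esub> z = x \<oplus>\<^bsub>diffpoly K \<delta>\<^esub> (y \<oplus>\<^bsub>diffpoly K \<delta>\<^esub> z)"
      by (simp only: dp_add add.assoc)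
  next
    fix x y show "x \<oplus>\<^bsub>diffpoly K \<delta>\<^esub> y = y \<oplus>\<^bsub>diffpoly K \<delta>\<^esub> x"
      by (simp only: dp_add add.commute)
  next
    fix x show "\<zero>\<^bsub>diffpoly K \<delta>\<^esub> \<oplus>\<^bsub>diffpoly K \<delta>\<^esub> x = x"
      by (simp only: dp_add dp_zero add_0_left)
  next
    fix x assume "x \<in> carrier (diffpoly K \<delta>)"
    then have "cK K (- x)" by (simp add: carrier_diffpoly cK_uminus)
    then show "\<exists>y\<in>carrier (diffpoly K \<delta>). y \<oplus>\<^bsub>diffpoly K \<delta>\<^esub> x = \<zero>\<^bsub>diffpoly K \<delta>\<^esub>"
      by (intro bexI[of _ "- x"]) (simp_all only: dp_add dp_zero carrier_diffpoly mem_Collect_eq left_minus)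
  qed
next
  show "monoid (diffpoly K \<delta>)"
  proof (rule monoidI)
    fix x y assume "x \<in> carrier (diffpoly K \<delta>)" "y \<in> carrier (diffpoly K \<delta>)"
    then have "cK K x" "cK K y" by (simp_all add: carrier_diffpoly)
    then show "x \<otimes>\<^bsub>diffpoly K \<delta>\<^esub> y \<in> carrier (diffpoly K \<delta>)"
      by (simp only: carrier_diffpoly mem_Collect_eq dp_mul dp_mult_Phi[OF d] cK_Phi[OF d])
  next
    show "\<one>\<^bsub>diffpoly K \<delta>\<^esub> \<in> carrier (diffpoly K \<delta>)"
      by (simp add: carrier_diffpoly dp_one cK_monom)
  next
    fix x y z assume xyz: "x \<in> carrier (diffpoly K \<delta>)" "y \<in> carrier (diffpoly K \<delta>)" "z \<in> carrier (diffpoly K \<delta>)"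
    then have c: "cK K x" "cK K y" "cK K z" by (auto simp: carrier_diffpoly)
    have "Phi \<delta> (Phi \<delta> x y) z = Phi \<delta> x (Phi \<delta> y z)"
      by (rule Phi_assoc[OF d c(1)]) (use c(2) in \<open>simp add: cK_def\<close>)
    then show "x \<otimes>\<^bsub>diffpoly K \<delta>\<^esub> y \<otimes>\<^bsub>diffpoly K \<delta>\<^esub> z = x \<otimes>\<^bsub>diffpoly K \<delta>\<^esub> (y \<otimes>\<^bsub>diffpoly K \<delta>\<^esub> z)"
      using c by (simp only: dp_mul dp_mult_Phi[OF d] cK_Phi[OF d])
  next
    fix x assume "x \<in> carrier (diffpoly K \<delta>)"
    then have c: "cK K x" by (auto simp: carrier_diffpoly)
    have o: "cK K (dp_monom [] (1::'a))" by (simp add: cK_monom)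
    show "\<one>\<^bsub>diffpoly K \<delta>\<^esub> \<otimes>\<^bsub>diffpoly K \<delta>\<^esub> x = x"
      using c o by (simp only: dp_one dp_mul dp_mult_Phi[OF d] Phi_one_left)
    show "x \<otimes>\<^bsub>diffpoly K \<delta>\<^esub> \<one>\<^bsub>diffpoly K \<delta>\<^esub> = x"
      using c o by (simp only: dp_one dp_mul dp_mult_Phi[OF d] Phi_one_right[OF d])
  qed
next
  fix x y z assume xyz: "x \<in> carrier (diffpoly K \<delta>)" "y \<in> carrier (diffpoly K \<delta>)" "z \<in> carrier (diffpoly K \<delta>)"
  then have c: "cK K x" "cK K y" "cK K z" by (auto simp: carrier_diffpoly)
  have f: "finite (dp_supp x)" "finite (dp_supp y)" using c by (auto simp: cK_def)
  show "(x \<oplus>\<^bsub>diffpoly K \<delta>\<^esub> y) \<otimes>\<^bsub>diffpoly K \<delta>\<^esub> z = x \<otimes>\<^bsub>diffpoly K \<delta>\<^esub> z \<oplus>\<^bsub>diffpoly K \<delta>\<^esub> y \<otimes>\<^bsub>diffpoly K \<delta>\<^esub> z"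
    using c cK_add[OF c(1,2)] by (simp only: dp_add dp_mul dp_mult_Phi[OF d] Phi_add[OF f])
  show "z \<otimes>\<^bsub>diffpoly K \<delta>\<^esub> (x \<oplus>\<^bsub>diffpoly K \<delta>\<^esub> y) = z \<otimes>\<^bsub>diffpoly K \<delta>\<^esub> x \<oplus>\<^bsub>diffpoly K \<delta>\<^esub> z \<otimes>\<^bsub>diffpoly K \<delta>\<^esub> y"
    using c cK_add[OF c(1,2)] by (simp only: dp_add dp_mul dp_mult_Phi[OF d] Phi_add_right[OF d c(3)])
qed


fun rho_m :: "('i \<Rightarrow> 'a::ring_1 \<Rightarrow> 'a) \<Rightarrow> 'i list \<Rightarrow> 'a \<Rightarrow> 'i list \<Rightarrow> 'a" where
  "rho_m \<delta> [] a = dp_monom [] a"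
| "rho_m \<delta> (i # t) a = consR i (rho_m \<delta> t a) - rho_m \<delta> t (\<delta> i a)"

definition rho :: "('i \<Rightarrow> 'a::ring_1 \<Rightarrow> 'a) \<Rightarrow> ('i list \<Rightarrow> 'a) \<Rightarrow> 'i list \<Rightarrow> 'a" where
  "rho \<delta> p = (\<Sum>t\<in>dp_supp p. rho_m \<delta> t (p t))"

lemma rho_m_add: "dK \<delta> K \<Longrightarrow> set t \<subseteq> K \<Longrightarrow> rho_m \<delta> t (a + b) = rho_m \<delta> t a + rho_m \<delta> t b"
proof (induction t arbitrary: a b)
  case Nil show ?case by (rule ext) (simp add: dp_monom_def)
next
  case (Cons i t)
  then have d: "is_derivation (\<delta> i)" and IH: "\<And>a b. rho_m \<delta> t (a + b) = rho_m \<delta> t a + rho_m \<delta> t b"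
    by (auto simp: dK_def)
  show ?case by (simp add: IH consR_add der_add[OF d] fun_eq_iff algebra_simps)
qed

lemma rho_m_zero: "dK \<delta> K \<Longrightarrow> set t \<subseteq> K \<Longrightarrow> rho_m \<delta> t 0 = 0"
  using rho_m_add[of \<delta> K t 0 0] by simp

lemma rho_superset: assumes "dK \<delta> K" "finite F" "dp_supp p \<subseteq> F" "\<forall>t\<in>F. set t \<subseteq> K"
  shows "rho \<delta> p = (\<Sum>t\<in>F. rho_m \<delta> t (p t))"
  unfolding rho_def
  by (rule sum.mono_neutral_left[OF assms(2,3)]) (use assms in \<open>auto simp: dp_supp_def rho_m_zero\<close>)

lemma rho_add: assumes "dK \<delta> K" "cK K p" "cK K q"
  shows "rho \<delta> (p + q) = rho \<delta> p + rho \<delta> q"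
proof -
  let ?F = "dp_supp p \<union> dp_supp q"
  have F: "finite ?F" "\<forall>t\<in>?F. set t \<subseteq> K" using assms by (auto simp: cK_def)
  have "rho \<delta> (p + q) = (\<Sum>t\<in>?F. rho_m \<delta> t ((p + q) t))"
    by (rule rho_superset[OF assms(1) F(1) _ F(2)]) (use supp_add[of p q] in auto)
  also have "\<dots> = (\<Sum>t\<in>?F. rho_m \<delta> t (p t)) + (\<Sum>t\<in>?F. rho_m \<delta> t (q t))"
    using F(2) by (simp add: rho_m_add[OF assms(1)] sum.distrib)
  also have "\<dots> = rho \<delta> p + rho \<delta> q"
  proof -
    have "rho \<delta> p = (\<Sum>t\<in>?F. rho_m \<delta> t (p t))" by (rule rho_superset[OF assms(1) F(1) _ F(2)]) auto
    moreover have "rho \<delta> q = (\<Sum>t\<in>?F. rho_m \<delta> t (q t))" by (rule rho_superset[OF assms(1) F(1) _ F(2)]) auto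
    ultimately show ?thesis by simp
  qed
  finally show ?thesis .
qed

lemma rho_zero: "rho \<delta> 0 = 0"
  by (simp add: rho_def dp_supp_def)

lemma rho_diff: assumes "dK \<delta> K" "cK K p" "cK K q"
  shows "rho \<delta> (p - q) = rho \<delta> p - rho \<delta> q"
proof -
  have "rho \<delta> (p - q + q) = rho \<delta> (p - q) + rho \<delta> q"
    by (rule rho_add[OF assms(1) cK_diff[OF assms(2,3)] assms(3)])
  then show ?thesis by (simp add: algebra_simps)
qed

lemma rho_sum: assumes "dK \<delta> K" "\<And>k. k \<in> F \<Longrightarrow> cK K (g k)"
  shows "rho \<delta> (\<Sum>k\<in>F. g k) = (\<Sum>k\<in>F. rho \<delta> (g k))"
  using assms(2)
proof (induction F rule: infinite_finite_induct)
  case (insert x F)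
  have c: "cK K (sum g F)" by (rule cK_sum) (use insert in auto)
  have "rho \<delta> (sum g (insert x F)) = rho \<delta> (g x + sum g F)"
    by (subst sum.insert[OF insert.hyps]) (rule refl)
  also have "\<dots> = rho \<delta> (g x) + rho \<delta> (sum g F)"
    by (rule rho_add[OF assms(1) _ c]) (use insert in auto)
  finally show ?case using insert by (subst sum.insert[OF insert.hyps]) auto
next
  case (infinite A) then show ?case by (metis rho_zero sum.infinite)
qed (metis rho_zero sum.empty)

lemma rho_monom: assumes "dK \<delta> K" "set t \<subseteq> K" shows "rho \<delta> (dp_monom t a) = rho_m \<delta> t a"
proof -
  have "rho \<delta> (dp_monom t a) = (\<Sum>s\<in>{t}. rho_m \<delta> s (dp_monom t a s))"
    by (rule rho_superset[OF assms(1)]) (use assms(2) in \<open>auto simp: dp_supp_def dp_monom_def\<close>)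
  then show ?thesis by (simp add: dp_monom_def)
qed

lemma cK_consR: "i \<in> K \<Longrightarrow> cK K p \<Longrightarrow> cK K (consR i p)"
  by (auto simp: cK_def supp_consR)

lemma cK_comp: "is_derivation d \<Longrightarrow> cK K p \<Longrightarrow> cK K (d \<circ> p)"
proof -
  assume d: "is_derivation d" and c: "cK K p"
  have "dp_supp (d \<circ> p) \<subseteq> dp_supp p" by (auto simp: dp_supp_def der_zero[OF d])
  then show ?thesis using c by (auto simp: cK_def intro: finite_subset)
qed

lemma rho_xmul: assumes "dK \<delta> K" "i \<in> K" "cK K p"
  shows "rho \<delta> (dp_xmul \<delta> i p) = consR i (rho \<delta> p)"
proof -
  have d: "is_derivation (\<delta> i)" using assms by (auto simp: dK_def)
  have fin: "finite (dp_supp p)" and W: "\<forall>t\<in>dp_supp p. set t \<subseteq> K" using assms(3) by (auto simp: cK_def)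
  have "rho \<delta> (consR i p) = (\<Sum>t\<in>Cons i ` dp_supp p. rho_m \<delta> t (consR i p t))"
    by (simp add: rho_def supp_consR)
  also have "\<dots> = (\<Sum>s\<in>dp_supp p. rho_m \<delta> (i # s) (p s))"
    by (subst sum.reindex) (auto simp: inj_on_def)
  finally have 1: "rho \<delta> (consR i p) = (\<Sum>s\<in>dp_supp p. rho_m \<delta> (i # s) (p s))" .
  have "rho \<delta> (\<delta> i \<circ> p) = (\<Sum>s\<in>dp_supp p. rho_m \<delta> s ((\<delta> i \<circ> p) s))"
    by (rule rho_superset[OF assms(1) fin _ W]) (auto simp: dp_supp_def der_zero[OF d])
  then have 2: "rho \<delta> (\<delta> i \<circ> p) = (\<Sum>s\<in>dp_supp p. rho_m \<delta> s (\<delta> i (p s)))" by simp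
  have "rho \<delta> (dp_xmul \<delta> i p) = rho \<delta> (consR i p) + rho \<delta> (\<delta> i \<circ> p)"
    unfolding xmul_eq by (rule rho_add[OF assms(1) cK_consR[OF assms(2,3)] cK_comp[OF d assms(3)]])
  also have "\<dots> = (\<Sum>s\<in>dp_supp p. consR i (rho_m \<delta> s (p s)))"
    unfolding 1 2 by (simp add: sum.distrib[symmetric])
  also have "\<dots> = consR i (rho \<delta> p)"
    by (simp add: rho_def consR_sum)
  finally show ?thesis .
qed

fun shw :: "'i list \<Rightarrow> ('i list \<Rightarrow> 'a::zero) \<Rightarrow> 'i list \<Rightarrow> 'a" where
  "shw [] f = f"
| "shw (i # w) f = consR i (shw w f)"

lemma rho_Xw: assumes "dK \<delta> K" "set w \<subseteq> K" "cK K p"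
  shows "rho \<delta> (Xw \<delta> w p) = shw w (rho \<delta> p)"
  using assms(2)
proof (induction w)
  case (Cons i w)
  then have "cK K (Xw \<delta> w p)" using cK_Xw[OF assms(1) _ assms(3)] by auto
  then show ?case using Cons by (simp add: rho_xmul[OF assms(1)])
qed simp

lemma supp_rho_m: "dp_supp (rho_m \<delta> t a) \<subseteq> {w. set w \<subseteq> set t}"
proof (induction t arbitrary: a)
  case Nil then show ?case by (auto simp: dp_supp_def dp_monom_def)
next
  case (Cons i t)
  have "dp_supp (rho_m \<delta> (i # t) a) \<subseteq> dp_supp (consR i (rho_m \<delta> t a)) \<union> dp_supp (rho_m \<delta> t (\<delta> i a))"
    by (simp add: supp_diff)
  also have "\<dots> \<subseteq> {w. set w \<subseteq> set (i # t)}"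
    using Cons[of a] Cons[of "\<delta> i a"] by (force simp: supp_consR)
  finally show ?case .
qed

lemma finite_supp_rho_m: "finite (dp_supp (rho_m \<delta> t a))"
proof (induction t arbitrary: a)
  case Nil then show ?case by (rule finite_subset[of _ "{[]}"]) (auto simp: dp_supp_def dp_monom_def)
next
  case (Cons i t)
  have "dp_supp (rho_m \<delta> (i # t) a) \<subseteq> dp_supp (consR i (rho_m \<delta> t a)) \<union> dp_supp (rho_m \<delta> t (\<delta> i a))"
    by (simp add: supp_diff)
  then show ?case by (rule finite_subset) (use Cons in \<open>simp add: supp_consR\<close>)
qed

lemma cK_rho: assumes "cK J p" shows "cK J (rho \<delta> p)"
  unfolding rho_def
proof (rule cK_sum)
  fix t assume "t \<in> dp_supp p"
  then have "set t \<subseteq> J" using assms by (auto simp: cK_def)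
  then show "cK J (rho_m \<delta> t (p t))"
    using supp_rho_m[of \<delta> t "p t"] finite_supp_rho_m[of \<delta> t "p t"] by (auto simp: cK_def)
qed

lemma shw_supp: "shw w f u \<noteq> 0 \<Longrightarrow> \<exists>v. u = w @ v \<and> f v \<noteq> 0"
proof (induction w arbitrary: u)
  case (Cons i w)
  then obtain v where "u = i # v" "shw w f v \<noteq> 0"
    by (cases u) (auto split: if_splits)
  then show ?case using Cons.IH by auto
qed simp

lemma rho_m_tri: "length t \<le> length u \<Longrightarrow> rho_m \<delta> t a u = (if u = t then a else 0)"
proof (induction t arbitrary: a u)
  case Nil then show ?case by (simp add: dp_monom_def)
next
  case (Cons i t)
  have "rho_m \<delta> t (\<delta> i a) u = 0" using Cons.IH[of u "\<delta> i a"] Cons.prems by auto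
  moreover obtain j v where u: "u = j # v" using Cons.prems by (cases u) auto
  moreover have "rho_m \<delta> t a v = (if v = t then a else 0)" using Cons.IH[of v a] Cons.prems u by auto
  ultimately show ?case by auto
qed

lemma rho_inj: assumes "cK K p" "rho \<delta> p = 0" shows "p = 0"
proof (rule ccontr)
  assume "p \<noteq> 0"
  then have ne: "dp_supp p \<noteq> {}" by (auto simp: dp_supp_def fun_eq_iff)
  have fin: "finite (dp_supp p)" using assms by (simp add: cK_def)
  have "Max (length ` dp_supp p) \<in> length ` dp_supp p" using Max_in[of "length ` dp_supp p"] fin ne by auto
  then obtain t where t: "t \<in> dp_supp p" "length t = Max (length ` dp_supp p)" by auto
  have le: "\<And>s. s \<in> dp_supp p \<Longrightarrow> length s \<le> length t"
    using t(2) fin by simp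
  have "rho \<delta> p t = (\<Sum>s\<in>dp_supp p. rho_m \<delta> s (p s) t)"
    by (simp add: rho_def fun_sum_apply)
  also have "\<dots> = (\<Sum>s\<in>dp_supp p. if t = s then p s else 0)"
    by (rule sum.cong[OF refl]) (simp add: rho_m_tri le)
  also have "\<dots> = p t" using fin t(1) by simp
  finally have "rho \<delta> p t \<noteq> 0" using t(1) by (simp add: dp_supp_def)
  then show False using assms(2) by simp
qed

definition lam :: "('i \<Rightarrow> 'a::ring_1 \<Rightarrow> 'a) \<Rightarrow> ('i list \<Rightarrow> 'a) \<Rightarrow> 'i list \<Rightarrow> 'a" where
  "lam \<delta> f = (\<Sum>w\<in>dp_supp f. Xw \<delta> w (dp_monom [] (f w)))"

lemma shw_monom: "shw w (dp_monom [] a) = dp_monom w a"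
  by (induction w) (auto simp: dp_monom_def consR_def fun_eq_iff split: list.split)

lemma cK_lam: assumes "dK \<delta> J" "cK J f" shows "cK J (lam \<delta> f)"
  unfolding lam_def
proof (rule cK_sum, rule cK_Xw[OF assms(1)])
  fix w assume "w \<in> dp_supp f"
  then show "set w \<subseteq> J" using assms(2) by (auto simp: cK_def)
  show "cK J (dp_monom [] (f w))" by (rule cK_monom) simp
qed

lemma rho_lam: assumes "dK \<delta> K" "cK K f" shows "rho \<delta> (lam \<delta> f) = f"
proof -
  have W: "\<And>w. w \<in> dp_supp f \<Longrightarrow> set w \<subseteq> K" using assms(2) by (auto simp: cK_def)
  have "rho \<delta> (lam \<delta> f) = (\<Sum>w\<in>dp_supp f. rho \<delta> (Xw \<delta> w (dp_monom [] (f w))))"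
    unfolding lam_def
    by (rule rho_sum[OF assms(1)], rule cK_Xw[OF assms(1)]) (auto simp: W cK_monom)
  also have "\<dots> = (\<Sum>w\<in>dp_supp f. dp_monom w (f w))"
  proof (rule sum.cong[OF refl])
    fix w assume "w \<in> dp_supp f"
    then show "rho \<delta> (Xw \<delta> w (dp_monom [] (f w))) = dp_monom w (f w)"
      using W by (simp add: rho_Xw[OF assms(1)] cK_monom rho_monom[OF assms(1)] shw_monom)
  qed
  also have "\<dots> = f" using monom_decomp[of f] assms(2) by (simp add: cK_def)
  finally show ?thesis .
qed


lemma (in ring) asg_iff:
  "additive_subgroup H R \<longleftrightarrow> H \<subseteq> carrier R \<and> \<zero> \<in> H \<and> (\<forall>x\<in>H. \<forall>y\<in>H. x \<oplus> y \<in> H) \<and> (\<forall>x\<in>H. \<ominus> x \<in> H)"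
proof
  assume "additive_subgroup H R"
  then interpret H: additive_subgroup H R .
  show "H \<subseteq> carrier R \<and> \<zero> \<in> H \<and> (\<forall>x\<in>H. \<forall>y\<in>H. x \<oplus> y \<in> H) \<and> (\<forall>x\<in>H. \<ominus> x \<in> H)"
    using H.a_subset by auto
next
  assume h: "H \<subseteq> carrier R \<and> \<zero> \<in> H \<and> (\<forall>x\<in>H. \<forall>y\<in>H. x \<oplus> y \<in> H) \<and> (\<forall>x\<in>H. \<ominus> x \<in> H)"
  show "additive_subgroup H R"
  proof (rule additive_subgroupI, rule subgroup.intro)
    show "H \<subseteq> carrier (add_monoid R)" using h by simp
    show "\<And>x y. x \<in> H \<Longrightarrow> y \<in> H \<Longrightarrow> x \<otimes>\<^bsub>add_monoid R\<^esub> y \<in> H" using h by simp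
    show "\<one>\<^bsub>add_monoid R\<^esub> \<in> H" using h by simp
    show "\<And>x. x \<in> H \<Longrightarrow> inv\<^bsub>add_monoid R\<^esub> x \<in> H" using h by (simp add: a_inv_def[symmetric])
  qed
qed

lemma ainv_sub:
  assumes rA: "ring A" and sub: "subring_nu A B" and zero: "\<zero>\<^bsub>B\<^esub> = \<zero>\<^bsub>A\<^esub>" and x: "x \<in> carrier B"
  shows "\<ominus>\<^bsub>B\<^esub> x = \<ominus>\<^bsub>A\<^esub> x"
proof -
  have rB: "ring B" and BA: "carrier B \<subseteq> carrier A"
    and ops: "\<forall>x\<in>carrier B. \<forall>y\<in>carrier B. x \<otimes>\<^bsub>B\<^esub> y = x \<otimes>\<^bsub>A\<^esub> y \<and> x \<oplus>\<^bsub>B\<^esub> y = x \<oplus>\<^bsub>A\<^esub> y"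
    using sub by (auto simp: subring_nu_def)
  interpret A: ring A by fact
  interpret B: ring B by fact
  have nB: "\<ominus>\<^bsub>B\<^esub> x \<in> carrier B" using x by simp
  have "\<ominus>\<^bsub>B\<^esub> x \<oplus>\<^bsub>A\<^esub> x = \<zero>\<^bsub>A\<^esub>"
    using ops nB x B.l_neg[OF x] zero by auto
  moreover have "x \<in> carrier A" "\<ominus>\<^bsub>B\<^esub> x \<in> carrier A" using nB x BA by auto
  ultimately show ?thesis using A.minus_equality[of "\<ominus>\<^bsub>B\<^esub> x" x] by simp
qed

lemma qd_left:
  fixes A :: "('b, 'm) ring_scheme" and B :: "('b, 'n) ring_scheme"
  assumes rA: "ring A" and sub: "subring_nu A B" and one: "\<one>\<^bsub>B\<^esub> = \<one>\<^bsub>A\<^esub>" and zero: "\<zero>\<^bsub>B\<^esub> = \<zero>\<^bsub>A\<^esub>"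
    and rc: "right_corner A B" and qd: "left_quasi_duo A"
  shows "left_quasi_duo B"
  unfolding left_quasi_duo_def
proof (intro allI impI)
  fix M assume mM: "maximal_left_ideal B M"
  have rB: "ring B" and BA: "carrier B \<subseteq> carrier A"
    and ops: "\<And>x y. x \<in> carrier B \<Longrightarrow> y \<in> carrier B \<Longrightarrow> x \<otimes>\<^bsub>B\<^esub> y = x \<otimes>\<^bsub>A\<^esub> y"
    and opa: "\<And>x y. x \<in> carrier B \<Longrightarrow> y \<in> carrier B \<Longrightarrow> x \<oplus>\<^bsub>B\<^esub> y = x \<oplus>\<^bsub>A\<^esub> y"
    using sub by (auto simp: subring_nu_def)
  interpret A: ring A by fact
  interpret B: ring B by fact
  have ainv: "\<And>x. x \<in> carrier B \<Longrightarrow> \<ominus>\<^bsub>B\<^esub> x = \<ominus>\<^bsub>A\<^esub> x" using ainv_sub[OF rA sub zero] .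
  obtain C where dc: "direct_complement A B C" and CB: "\<And>b c. b \<in> carrier B \<Longrightarrow> c \<in> C \<Longrightarrow> c \<otimes>\<^bsub>A\<^esub> b \<in> C"
    using rc by (auto simp: right_corner_def)
  have asgC: "additive_subgroup C A" and dec: "carrier A = {b \<oplus>\<^bsub>A\<^esub> c | b c. b \<in> carrier B \<and> c \<in> C}"
    and int: "carrier B \<inter> C = {\<zero>\<^bsub>A\<^esub>}"
    using dc by (auto simp: direct_complement_def)
  have Cs: "C \<subseteq> carrier A" "\<zero>\<^bsub>A\<^esub> \<in> C" "\<And>x y. x \<in> C \<Longrightarrow> y \<in> C \<Longrightarrow> x \<oplus>\<^bsub>A\<^esub> y \<in> C"
    "\<And>x. x \<in> C \<Longrightarrow> \<ominus>\<^bsub>A\<^esub> x \<in> C"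
    using asgC by (auto simp: A.asg_iff)
  have lM: "left_ideal B M" and MB: "M \<noteq> carrier B"
    and maxM: "\<And>M'. left_ideal B M' \<Longrightarrow> M \<subseteq> M' \<Longrightarrow> M' = M \<or> M' = carrier B"
    using mM by (auto simp: maximal_left_ideal_def)
  have asgM: "additive_subgroup M B" and Mmul: "\<And>r x. r \<in> carrier B \<Longrightarrow> x \<in> M \<Longrightarrow> r \<otimes>\<^bsub>B\<^esub> x \<in> M"
    using lM by (auto simp: left_ideal_def)
  have Ms: "M \<subseteq> carrier B" "\<zero>\<^bsub>A\<^esub> \<in> M" "\<And>x y. x \<in> M \<Longrightarrow> y \<in> M \<Longrightarrow> x \<oplus>\<^bsub>A\<^esub> y \<in> M"
    "\<And>x. x \<in> M \<Longrightarrow> \<ominus>\<^bsub>A\<^esub> x \<in> M"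
    using asgM zero opa ainv by (auto simp: B.asg_iff) (metis subsetD)+
  define P where "P = {m \<oplus>\<^bsub>A\<^esub> c | m c. m \<in> M \<and> c \<in> C}"
  have PA: "P \<subseteq> carrier A" using Ms(1) BA Cs(1) by (auto simp: P_def)
  have asgP: "additive_subgroup P A"
    unfolding A.asg_iff
  proof (intro conjI ballI)
    show "P \<subseteq> carrier A" by (rule PA)
    show "\<zero>\<^bsub>A\<^esub> \<in> P" unfolding P_def using Ms(2) Cs(2) by (intro CollectI exI[of _ "\<zero>\<^bsub>A\<^esub>"]) auto
  next
    fix x y assume "x \<in> P" "y \<in> P"
    then obtain m c m' c' where x: "x = m \<oplus>\<^bsub>A\<^esub> c" "m \<in> M" "c \<in> C" and y: "y = m' \<oplus>\<^bsub>A\<^esub> c'" "m' \<in> M" "c' \<in> C"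
      by (auto simp: P_def)
    have c: "m \<in> carrier A" "m' \<in> carrier A" "c \<in> carrier A" "c' \<in> carrier A" using x y Ms(1) BA Cs(1) by auto
    have "x \<oplus>\<^bsub>A\<^esub> y = (m \<oplus>\<^bsub>A\<^esub> m') \<oplus>\<^bsub>A\<^esub> (c \<oplus>\<^bsub>A\<^esub> c')" using c x y by (simp add: A.a_ac)
    then show "x \<oplus>\<^bsub>A\<^esub> y \<in> P" using x y Ms(3)[of m m'] Cs(3)[of c c'] unfolding P_def by blast
  next
    fix x assume "x \<in> P"
    then obtain m c where x: "x = m \<oplus>\<^bsub>A\<^esub> c" "m \<in> M" "c \<in> C" by (auto simp: P_def)
    have c: "m \<in> carrier A" "c \<in> carrier A" using x Ms(1) BA Cs(1) by auto
    have "\<ominus>\<^bsub>A\<^esub> x = \<ominus>\<^bsub>A\<^esub> m \<oplus>\<^bsub>A\<^esub> \<ominus>\<^bsub>A\<^esub> c" using c x by (simp add: A.minus_add)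
    then show "\<ominus>\<^bsub>A\<^esub> x \<in> P" using x Ms(4) Cs(4) by (auto simp: P_def)
  qed
  have Ps: "\<zero>\<^bsub>A\<^esub> \<in> P" "\<And>x y. x \<in> P \<Longrightarrow> y \<in> P \<Longrightarrow> x \<oplus>\<^bsub>A\<^esub> y \<in> P" "\<And>x. x \<in> P \<Longrightarrow> \<ominus>\<^bsub>A\<^esub> x \<in> P"
    using asgP by (auto simp: A.asg_iff)
  have oneP: "\<one>\<^bsub>A\<^esub> \<notin> P"
  proof
    assume "\<one>\<^bsub>A\<^esub> \<in> P"
    then obtain m c where mc: "\<one>\<^bsub>A\<^esub> = m \<oplus>\<^bsub>A\<^esub> c" "m \<in> M" "c \<in> C" by (auto simp: P_def)
    have mB: "m \<in> carrier B" using mc Ms(1) by auto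
    have c: "m \<in> carrier A" "c \<in> carrier A" using mc Ms(1) BA Cs(1) by auto
    have "c = \<ominus>\<^bsub>A\<^esub> m \<oplus>\<^bsub>A\<^esub> \<one>\<^bsub>A\<^esub>" using c mc(1) by (simp add: A.a_assoc[symmetric] A.l_neg)
    also have "\<dots> = \<ominus>\<^bsub>B\<^esub> m \<oplus>\<^bsub>B\<^esub> \<one>\<^bsub>B\<^esub>"
    proof -
      have "\<ominus>\<^bsub>B\<^esub> m \<in> carrier B" "\<one>\<^bsub>B\<^esub> \<in> carrier B" using mB by simp_all
      then show ?thesis using opa[of "\<ominus>\<^bsub>B\<^esub> m" "\<one>\<^bsub>B\<^esub>"] ainv[OF mB] one by simp
    qed
    finally have "c \<in> carrier B" using mB by simp
    then have "c = \<zero>\<^bsub>A\<^esub>" using int mc(3) by auto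
    then have "\<one>\<^bsub>B\<^esub> \<in> M" using mc c one by simp
    then have "M = carrier B" using Mmul Ms(1) by (auto, metis B.r_one)
    then show False using MB by simp
  qed
  define N where "N = {x \<in> carrier A. \<forall>a\<in>carrier A. a \<otimes>\<^bsub>A\<^esub> x \<in> P}"
  have lN: "left_ideal A N"
    unfolding left_ideal_def A.asg_iff
  proof (intro conjI ballI)
    show "N \<subseteq> carrier A" by (auto simp: N_def)
    show "\<zero>\<^bsub>A\<^esub> \<in> N" using Ps(1) by (auto simp: N_def)
  next
    fix x y assume "x \<in> N" "y \<in> N"
    then show "x \<oplus>\<^bsub>A\<^esub> y \<in> N" using Ps(2) by (auto simp: N_def A.r_distr)
  next
    fix x assume "x \<in> N"
    then show "\<ominus>\<^bsub>A\<^esub> x \<in> N" using Ps(3) by (auto simp: N_def A.r_minus)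
  next
    fix r x assume "r \<in> carrier A" "x \<in> N"
    then show "r \<otimes>\<^bsub>A\<^esub> x \<in> N" by (auto simp: N_def A.m_assoc[symmetric])
  qed
  have MN: "M \<subseteq> N"
  proof
    fix m assume m: "m \<in> M"
    then have mB: "m \<in> carrier B" using Ms(1) by auto
    have "\<forall>a\<in>carrier A. a \<otimes>\<^bsub>A\<^esub> m \<in> P"
    proof
      fix a assume "a \<in> carrier A"
      then obtain b c where a: "a = b \<oplus>\<^bsub>A\<^esub> c" "b \<in> carrier B" "c \<in> C" using dec by auto
      have "a \<otimes>\<^bsub>A\<^esub> m = b \<otimes>\<^bsub>A\<^esub> m \<oplus>\<^bsub>A\<^esub> c \<otimes>\<^bsub>A\<^esub> m"
      proof -
        have "b \<in> carrier A" "c \<in> carrier A" "m \<in> carrier A" using a mB BA Cs(1) by auto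
        then show ?thesis using a(1) by (simp add: A.l_distr)
      qed
      moreover have "b \<otimes>\<^bsub>A\<^esub> m \<in> M" using Mmul[OF a(2) m] ops[OF a(2) mB] by simp
      moreover have "c \<otimes>\<^bsub>A\<^esub> m \<in> C" using CB[OF mB a(3)] .
      ultimately show "a \<otimes>\<^bsub>A\<^esub> m \<in> P" by (auto simp: P_def)
    qed
    then show "m \<in> N" using mB BA by (auto simp: N_def)
  qed
  have oneN: "\<one>\<^bsub>A\<^esub> \<notin> N" using oneP by (auto simp: N_def)
  define F where "F = {L. left_ideal A L \<and> N \<subseteq> L \<and> \<one>\<^bsub>A\<^esub> \<notin> L}"
  have "\<forall>Ch\<in>chains F. \<exists>U\<in>F. \<forall>X\<in>Ch. X \<subseteq> U"
  proof
    fix Ch assume Ch: "Ch \<in> chains F"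
    show "\<exists>U\<in>F. \<forall>X\<in>Ch. X \<subseteq> U"
    proof (cases "Ch = {}")
      case True
      have "N \<in> F" using lN oneN by (simp add: F_def)
      then show ?thesis using True by blast
    next
      case False
      have sub: "Ch \<subseteq> F" and chain: "\<And>X Y. X \<in> Ch \<Longrightarrow> Y \<in> Ch \<Longrightarrow> X \<subseteq> Y \<or> Y \<subseteq> X"
        using Ch unfolding chains_def chain_subset_def by blast+
      have XF: "\<And>X. X \<in> Ch \<Longrightarrow> left_ideal A X \<and> N \<subseteq> X \<and> \<one>\<^bsub>A\<^esub> \<notin> X"
        using sub unfolding F_def by blast
      have X1: "\<And>X. X \<in> Ch \<Longrightarrow> X \<subseteq> carrier A"
        and X2: "\<And>X. X \<in> Ch \<Longrightarrow> \<zero>\<^bsub>A\<^esub> \<in> X"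
        and X3: "\<And>X x y. X \<in> Ch \<Longrightarrow> x \<in> X \<Longrightarrow> y \<in> X \<Longrightarrow> x \<oplus>\<^bsub>A\<^esub> y \<in> X"
        and X4: "\<And>X x. X \<in> Ch \<Longrightarrow> x \<in> X \<Longrightarrow> \<ominus>\<^bsub>A\<^esub> x \<in> X"
        and X5: "\<And>X r x. X \<in> Ch \<Longrightarrow> r \<in> carrier A \<Longrightarrow> x \<in> X \<Longrightarrow> r \<otimes>\<^bsub>A\<^esub> x \<in> X"
        using XF unfolding left_ideal_def A.asg_iff by blast+
      obtain X0 where X0: "X0 \<in> Ch" using False by auto
      have "left_ideal A (\<Union>Ch)"
        unfolding left_ideal_def A.asg_iff
      proof (intro conjI ballI)
        show "\<Union>Ch \<subseteq> carrier A" using X1 by blast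
        show "\<zero>\<^bsub>A\<^esub> \<in> \<Union>Ch" using X2 X0 by blast
      next
        fix x y assume "x \<in> \<Union>Ch" "y \<in> \<Union>Ch"
        then obtain X Y where xy: "x \<in> X" "X \<in> Ch" "y \<in> Y" "Y \<in> Ch" by auto
        show "x \<oplus>\<^bsub>A\<^esub> y \<in> \<Union>Ch"
        proof (cases "X \<subseteq> Y")
          case True
          then have "x \<oplus>\<^bsub>A\<^esub> y \<in> Y" using X3[of Y x y] xy by blast
          then show ?thesis using xy by blast
        next
          case False
          then have "Y \<subseteq> X" using chain[of X Y] xy by blast
          then have "x \<oplus>\<^bsub>A\<^esub> y \<in> X" using X3[of X x y] xy by blast
          then show ?thesis using xy by blast
        qed
      next
        fix x assume "x \<in> \<Union>Ch"
        then obtain X where "x \<in> X" "X \<in> Ch" by auto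
        then show "\<ominus>\<^bsub>A\<^esub> x \<in> \<Union>Ch" using X4 by blast
      next
        fix r x assume r: "r \<in> carrier A" and "x \<in> \<Union>Ch"
        then obtain X where "x \<in> X" "X \<in> Ch" by auto
        then show "r \<otimes>\<^bsub>A\<^esub> x \<in> \<Union>Ch" using X5 r by blast
      qed
      moreover have "N \<subseteq> \<Union>Ch" using XF X0 by blast
      moreover have "\<one>\<^bsub>A\<^esub> \<notin> \<Union>Ch" using XF by blast
      ultimately have "\<Union>Ch \<in> F" by (simp add: F_def)
      then show ?thesis by blast
    qed
  qed
  from Zorn_Lemma2[OF this] obtain L where LF: "L \<in> F" and Lmax0: "\<forall>X\<in>F. L \<subseteq> X \<longrightarrow> X = L"
    by blast
  have Lmax: "\<And>X. X \<in> F \<Longrightarrow> L \<subseteq> X \<Longrightarrow> X = L" using Lmax0 by blast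
  have lL: "left_ideal A L" and NL: "N \<subseteq> L" and oneL: "\<one>\<^bsub>A\<^esub> \<notin> L" using LF by (auto simp: F_def)
  have "maximal_left_ideal A L"
    unfolding maximal_left_ideal_def
  proof (intro conjI allI impI)
    show "left_ideal A L" by fact
    show "L \<noteq> carrier A" using oneL by auto
  next
    fix M' assume M': "left_ideal A M' \<and> L \<subseteq> M'"
    show "M' = L \<or> M' = carrier A"
    proof (cases "\<one>\<^bsub>A\<^esub> \<in> M'")
      case True
      have "M' \<subseteq> carrier A" using M' by (auto simp: left_ideal_def A.asg_iff)
      moreover have "carrier A \<subseteq> M'"
      proof
        fix r assume r: "r \<in> carrier A"
        then have "r \<otimes>\<^bsub>A\<^esub> \<one>\<^bsub>A\<^esub> \<in> M'" using M' True unfolding left_ideal_def by blast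
        then show "r \<in> M'" using r by simp
      qed
      ultimately show ?thesis by auto
    next
      case False
      then have "M' \<in> F" using M' NL by (auto simp: F_def)
      then show ?thesis using Lmax M' by auto
    qed
  qed
  then have rL: "right_ideal A L" using qd by (auto simp: left_quasi_duo_def)
  define LB where "LB = L \<inter> carrier B"
  have Ls: "L \<subseteq> carrier A" "\<zero>\<^bsub>A\<^esub> \<in> L" "\<And>x y. x \<in> L \<Longrightarrow> y \<in> L \<Longrightarrow> x \<oplus>\<^bsub>A\<^esub> y \<in> L"
    "\<And>x. x \<in> L \<Longrightarrow> \<ominus>\<^bsub>A\<^esub> x \<in> L" "\<And>r x. r \<in> carrier A \<Longrightarrow> x \<in> L \<Longrightarrow> r \<otimes>\<^bsub>A\<^esub> x \<in> L"
    using lL by (auto simp: left_ideal_def A.asg_iff)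
  have "left_ideal B LB"
    unfolding left_ideal_def B.asg_iff
  proof (intro conjI ballI)
    show "LB \<subseteq> carrier B" by (auto simp: LB_def)
    show "\<zero>\<^bsub>B\<^esub> \<in> LB" using Ls(2) zero B.zero_closed unfolding LB_def by simp
  next
    fix x y assume "x \<in> LB" "y \<in> LB"
    then have xy: "x \<in> L" "x \<in> carrier B" "y \<in> L" "y \<in> carrier B" by (auto simp: LB_def)
    have "x \<oplus>\<^bsub>B\<^esub> y \<in> carrier B" using xy by simp
    moreover have "x \<oplus>\<^bsub>B\<^esub> y \<in> L" using Ls(3)[of x y] opa[of x y] xy by simp
    ultimately show "x \<oplus>\<^bsub>B\<^esub> y \<in> LB" by (simp add: LB_def)
  next
    fix x assume "x \<in> LB"
    then have xy: "x \<in> L" "x \<in> carrier B" by (auto simp: LB_def)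
    have "\<ominus>\<^bsub>B\<^esub> x \<in> carrier B" using xy by simp
    moreover have "\<ominus>\<^bsub>B\<^esub> x \<in> L" using Ls(4)[of x] ainv[of x] xy by simp
    ultimately show "\<ominus>\<^bsub>B\<^esub> x \<in> LB" by (simp add: LB_def)
  next
    fix r x assume "r \<in> carrier B" "x \<in> LB"
    then have xy: "x \<in> L" "x \<in> carrier B" "r \<in> carrier B" "r \<in> carrier A" using BA by (auto simp: LB_def)
    have "r \<otimes>\<^bsub>B\<^esub> x \<in> carrier B" using xy by simp
    moreover have "r \<otimes>\<^bsub>B\<^esub> x \<in> L" using Ls(5)[of r x] ops[of r x] xy by simp
    ultimately show "r \<otimes>\<^bsub>B\<^esub> x \<in> LB" by (simp add: LB_def)
  qed
  moreover have "M \<subseteq> LB" using MN NL Ms(1) unfolding LB_def by blast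
  ultimately have "LB = M \<or> LB = carrier B" using maxM by blast
  moreover have "LB \<noteq> carrier B"
  proof
    assume e: "LB = carrier B"
    have "\<one>\<^bsub>B\<^esub> \<in> carrier B" by simp
    then have "\<one>\<^bsub>B\<^esub> \<in> LB" using e by simp
    then have "\<one>\<^bsub>B\<^esub> \<in> L" unfolding LB_def by (rule IntD1)
    then show False using oneL one by simp
  qed
  ultimately have LBM: "LB = M" by blast
  show "right_ideal B M"
    unfolding right_ideal_def
  proof (intro conjI ballI)
    show "additive_subgroup M B" by fact
  next
    fix r x assume r: "r \<in> carrier B" and x: "x \<in> M"
    have xB: "x \<in> carrier B" using x Ms(1) by auto
    have xL: "x \<in> L" using x LBM unfolding LB_def by blast
    have rA: "r \<in> carrier A" using r BA by blast
    have "x \<otimes>\<^bsub>A\<^esub> r \<in> L" using rL rA xL unfolding right_ideal_def by blast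
    moreover have "x \<otimes>\<^bsub>B\<^esub> r \<in> carrier B" using xB r by simp
    ultimately have "x \<otimes>\<^bsub>B\<^esub> r \<in> LB" using ops[OF xB r] unfolding LB_def by simp
    then show "x \<otimes>\<^bsub>B\<^esub> r \<in> M" using LBM by simp
  qed
qed

lemma qd_right:
  fixes A :: "('b, 'm) ring_scheme" and B :: "('b, 'n) ring_scheme"
  assumes rA: "ring A" and sub: "subring_nu A B" and one: "\<one>\<^bsub>B\<^esub> = \<one>\<^bsub>A\<^esub>" and zero: "\<zero>\<^bsub>B\<^esub> = \<zero>\<^bsub>A\<^esub>"
    and rc: "left_corner A B" and qd: "right_quasi_duo A"
  shows "right_quasi_duo B"
  unfolding right_quasi_duo_def
proof (intro allI impI)
  fix M assume mM: "maximal_right_ideal B M"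
  have rB: "ring B" and BA: "carrier B \<subseteq> carrier A"
    and ops: "\<And>x y. x \<in> carrier B \<Longrightarrow> y \<in> carrier B \<Longrightarrow> x \<otimes>\<^bsub>B\<^esub> y = x \<otimes>\<^bsub>A\<^esub> y"
    and opa: "\<And>x y. x \<in> carrier B \<Longrightarrow> y \<in> carrier B \<Longrightarrow> x \<oplus>\<^bsub>B\<^esub> y = x \<oplus>\<^bsub>A\<^esub> y"
    using sub by (auto simp: subring_nu_def)
  interpret A: ring A by fact
  interpret B: ring B by fact
  have ainv: "\<And>x. x \<in> carrier B \<Longrightarrow> \<ominus>\<^bsub>B\<^esub> x = \<ominus>\<^bsub>A\<^esub> x" using ainv_sub[OF rA sub zero] .
  obtain C where dc: "direct_complement A B C" and CB: "\<And>b c. b \<in> carrier B \<Longrightarrow> c \<in> C \<Longrightarrow> b \<otimes>\<^bsub>A\<^esub> c \<in> C"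
    using rc by (auto simp: left_corner_def)
  have asgC: "additive_subgroup C A" and dec: "carrier A = {b \<oplus>\<^bsub>A\<^esub> c | b c. b \<in> carrier B \<and> c \<in> C}"
    and int: "carrier B \<inter> C = {\<zero>\<^bsub>A\<^esub>}"
    using dc by (auto simp: direct_complement_def)
  have Cs: "C \<subseteq> carrier A" "\<zero>\<^bsub>A\<^esub> \<in> C" "\<And>x y. x \<in> C \<Longrightarrow> y \<in> C \<Longrightarrow> x \<oplus>\<^bsub>A\<^esub> y \<in> C"
    "\<And>x. x \<in> C \<Longrightarrow> \<ominus>\<^bsub>A\<^esub> x \<in> C"
    using asgC by (auto simp: A.asg_iff)
  have lM: "right_ideal B M" and MB: "M \<noteq> carrier B"
    and maxM: "\<And>M'. right_ideal B M' \<Longrightarrow> M \<subseteq> M' \<Longrightarrow> M' = M \<or> M' = carrier B"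
    using mM by (auto simp: maximal_right_ideal_def)
  have asgM: "additive_subgroup M B" and Mmul: "\<And>r x. r \<in> carrier B \<Longrightarrow> x \<in> M \<Longrightarrow> x \<otimes>\<^bsub>B\<^esub> r \<in> M"
    using lM by (auto simp: right_ideal_def)
  have Ms: "M \<subseteq> carrier B" "\<zero>\<^bsub>A\<^esub> \<in> M" "\<And>x y. x \<in> M \<Longrightarrow> y \<in> M \<Longrightarrow> x \<oplus>\<^bsub>A\<^esub> y \<in> M"
    "\<And>x. x \<in> M \<Longrightarrow> \<ominus>\<^bsub>A\<^esub> x \<in> M"
    using asgM zero opa ainv by (auto simp: B.asg_iff) (metis subsetD)+
  define P where "P = {m \<oplus>\<^bsub>A\<^esub> c | m c. m \<in> M \<and> c \<in> C}"
  have PA: "P \<subseteq> carrier A" using Ms(1) BA Cs(1) by (auto simp: P_def)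
  have asgP: "additive_subgroup P A"
    unfolding A.asg_iff
  proof (intro conjI ballI)
    show "P \<subseteq> carrier A" by (rule PA)
    show "\<zero>\<^bsub>A\<^esub> \<in> P" unfolding P_def using Ms(2) Cs(2) by (intro CollectI exI[of _ "\<zero>\<^bsub>A\<^esub>"]) auto
  next
    fix x y assume "x \<in> P" "y \<in> P"
    then obtain m c m' c' where x: "x = m \<oplus>\<^bsub>A\<^esub> c" "m \<in> M" "c \<in> C" and y: "y = m' \<oplus>\<^bsub>A\<^esub> c'" "m' \<in> M" "c' \<in> C"
      by (auto simp: P_def)
    have c: "m \<in> carrier A" "m' \<in> carrier A" "c \<in> carrier A" "c' \<in> carrier A" using x y Ms(1) BA Cs(1) by auto
    have "x \<oplus>\<^bsub>A\<^esub> y = (m \<oplus>\<^bsub>A\<^esub> m') \<oplus>\<^bsub>A\<^esub> (c \<oplus>\<^bsub>A\<^esub> c')" using c x y by (simp add: A.a_ac)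
    then show "x \<oplus>\<^bsub>A\<^esub> y \<in> P" using x y Ms(3)[of m m'] Cs(3)[of c c'] unfolding P_def by blast
  next
    fix x assume "x \<in> P"
    then obtain m c where x: "x = m \<oplus>\<^bsub>A\<^esub> c" "m \<in> M" "c \<in> C" by (auto simp: P_def)
    have c: "m \<in> carrier A" "c \<in> carrier A" using x Ms(1) BA Cs(1) by auto
    have "\<ominus>\<^bsub>A\<^esub> x = \<ominus>\<^bsub>A\<^esub> m \<oplus>\<^bsub>A\<^esub> \<ominus>\<^bsub>A\<^esub> c" using c x by (simp add: A.minus_add)
    then show "\<ominus>\<^bsub>A\<^esub> x \<in> P" using x Ms(4) Cs(4) by (auto simp: P_def)
  qed
  have Ps: "\<zero>\<^bsub>A\<^esub> \<in> P" "\<And>x y. x \<in> P \<Longrightarrow> y \<in> P \<Longrightarrow> x \<oplus>\<^bsub>A\<^esub> y \<in> P" "\<And>x. x \<in> P \<Longrightarrow> \<ominus>\<^bsub>A\<^esub> x \<in> P"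
    using asgP by (auto simp: A.asg_iff)
  have oneP: "\<one>\<^bsub>A\<^esub> \<notin> P"
  proof
    assume "\<one>\<^bsub>A\<^esub> \<in> P"
    then obtain m c where mc: "\<one>\<^bsub>A\<^esub> = m \<oplus>\<^bsub>A\<^esub> c" "m \<in> M" "c \<in> C" by (auto simp: P_def)
    have mB: "m \<in> carrier B" using mc Ms(1) by auto
    have c: "m \<in> carrier A" "c \<in> carrier A" using mc Ms(1) BA Cs(1) by auto
    have "c = \<ominus>\<^bsub>A\<^esub> m \<oplus>\<^bsub>A\<^esub> \<one>\<^bsub>A\<^esub>" using c mc(1) by (simp add: A.a_assoc[symmetric] A.l_neg)
    also have "\<dots> = \<ominus>\<^bsub>B\<^esub> m \<oplus>\<^bsub>B\<^esub> \<one>\<^bsub>B\<^esub>"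
    proof -
      have "\<ominus>\<^bsub>B\<^esub> m \<in> carrier B" "\<one>\<^bsub>B\<^esub> \<in> carrier B" using mB by simp_all
      then show ?thesis using opa[of "\<ominus>\<^bsub>B\<^esub> m" "\<one>\<^bsub>B\<^esub>"] ainv[OF mB] one by simp
    qed
    finally have "c \<in> carrier B" using mB by simp
    then have "c = \<zero>\<^bsub>A\<^esub>" using int mc(3) by auto
    then have "\<one>\<^bsub>B\<^esub> \<in> M" using mc c one by simp
    then have "M = carrier B" using Mmul Ms(1) by (auto, metis B.l_one)
    then show False using MB by simp
  qed
  define N where "N = {x \<in> carrier A. \<forall>a\<in>carrier A. x \<otimes>\<^bsub>A\<^esub> a \<in> P}"
  have lN: "right_ideal A N"
    unfolding right_ideal_def A.asg_iff
  proof (intro conjI ballI)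
    show "N \<subseteq> carrier A" by (auto simp: N_def)
    show "\<zero>\<^bsub>A\<^esub> \<in> N" using Ps(1) by (auto simp: N_def)
  next
    fix x y assume "x \<in> N" "y \<in> N"
    then show "x \<oplus>\<^bsub>A\<^esub> y \<in> N" using Ps(2) by (auto simp: N_def A.l_distr)
  next
    fix x assume "x \<in> N"
    then show "\<ominus>\<^bsub>A\<^esub> x \<in> N" using Ps(3) by (auto simp: N_def A.l_minus)
  next
    fix r x assume "r \<in> carrier A" "x \<in> N"
    then show "x \<otimes>\<^bsub>A\<^esub> r \<in> N" by (auto simp: N_def A.m_assoc)
  qed
  have MN: "M \<subseteq> N"
  proof
    fix m assume m: "m \<in> M"
    then have mB: "m \<in> carrier B" using Ms(1) by auto
    have "\<forall>a\<in>carrier A. m \<otimes>\<^bsub>A\<^esub> a \<in> P"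
    proof
      fix a assume "a \<in> carrier A"
      then obtain b c where a: "a = b \<oplus>\<^bsub>A\<^esub> c" "b \<in> carrier B" "c \<in> C" using dec by auto
      have "m \<otimes>\<^bsub>A\<^esub> a = m \<otimes>\<^bsub>A\<^esub> b \<oplus>\<^bsub>A\<^esub> m \<otimes>\<^bsub>A\<^esub> c"
      proof -
        have "b \<in> carrier A" "c \<in> carrier A" "m \<in> carrier A" using a mB BA Cs(1) by auto
        then show ?thesis using a(1) by (simp add: A.r_distr)
      qed
      moreover have "m \<otimes>\<^bsub>A\<^esub> b \<in> M" using Mmul[OF a(2) m] ops[OF mB a(2)] by simp
      moreover have "m \<otimes>\<^bsub>A\<^esub> c \<in> C" using CB[OF mB a(3)] .
      ultimately show "m \<otimes>\<^bsub>A\<^esub> a \<in> P" by (auto simp: P_def)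
    qed
    then show "m \<in> N" using mB BA by (auto simp: N_def)
  qed
  have oneN: "\<one>\<^bsub>A\<^esub> \<notin> N" using oneP by (auto simp: N_def)
  define F where "F = {L. right_ideal A L \<and> N \<subseteq> L \<and> \<one>\<^bsub>A\<^esub> \<notin> L}"
  have "\<forall>Ch\<in>chains F. \<exists>U\<in>F. \<forall>X\<in>Ch. X \<subseteq> U"
  proof
    fix Ch assume Ch: "Ch \<in> chains F"
    show "\<exists>U\<in>F. \<forall>X\<in>Ch. X \<subseteq> U"
    proof (cases "Ch = {}")
      case True
      have "N \<in> F" using lN oneN by (simp add: F_def)
      then show ?thesis using True by blast
    next
      case False
      have sub: "Ch \<subseteq> F" and chain: "\<And>X Y. X \<in> Ch \<Longrightarrow> Y \<in> Ch \<Longrightarrow> X \<subseteq> Y \<or> Y \<subseteq> X"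
        using Ch unfolding chains_def chain_subset_def by blast+
      have XF: "\<And>X. X \<in> Ch \<Longrightarrow> right_ideal A X \<and> N \<subseteq> X \<and> \<one>\<^bsub>A\<^esub> \<notin> X"
        using sub unfolding F_def by blast
      have X1: "\<And>X. X \<in> Ch \<Longrightarrow> X \<subseteq> carrier A"
        and X2: "\<And>X. X \<in> Ch \<Longrightarrow> \<zero>\<^bsub>A\<^esub> \<in> X"
        and X3: "\<And>X x y. X \<in> Ch \<Longrightarrow> x \<in> X \<Longrightarrow> y \<in> X \<Longrightarrow> x \<oplus>\<^bsub>A\<^esub> y \<in> X"
        and X4: "\<And>X x. X \<in> Ch \<Longrightarrow> x \<in> X \<Longrightarrow> \<ominus>\<^bsub>A\<^esub> x \<in> X"
        and X5: "\<And>X r x. X \<in> Ch \<Longrightarrow> r \<in> carrier A \<Longrightarrow> x \<in> X \<Longrightarrow> x \<otimes>\<^bsub>A\<^esub> r \<in> X"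
        using XF unfolding right_ideal_def A.asg_iff by blast+
      obtain X0 where X0: "X0 \<in> Ch" using False by auto
      have "right_ideal A (\<Union>Ch)"
        unfolding right_ideal_def A.asg_iff
      proof (intro conjI ballI)
        show "\<Union>Ch \<subseteq> carrier A" using X1 by blast
        show "\<zero>\<^bsub>A\<^esub> \<in> \<Union>Ch" using X2 X0 by blast
      next
        fix x y assume "x \<in> \<Union>Ch" "y \<in> \<Union>Ch"
        then obtain X Y where xy: "x \<in> X" "X \<in> Ch" "y \<in> Y" "Y \<in> Ch" by auto
        show "x \<oplus>\<^bsub>A\<^esub> y \<in> \<Union>Ch"
        proof (cases "X \<subseteq> Y")
          case True
          then have "x \<oplus>\<^bsub>A\<^esub> y \<in> Y" using X3[of Y x y] xy by blast
          then show ?thesis using xy by blast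
        next
          case False
          then have "Y \<subseteq> X" using chain[of X Y] xy by blast
          then have "x \<oplus>\<^bsub>A\<^esub> y \<in> X" using X3[of X x y] xy by blast
          then show ?thesis using xy by blast
        qed
      next
        fix x assume "x \<in> \<Union>Ch"
        then obtain X where "x \<in> X" "X \<in> Ch" by auto
        then show "\<ominus>\<^bsub>A\<^esub> x \<in> \<Union>Ch" using X4 by blast
      next
        fix r x assume r: "r \<in> carrier A" and "x \<in> \<Union>Ch"
        then obtain X where "x \<in> X" "X \<in> Ch" by auto
        then show "x \<otimes>\<^bsub>A\<^esub> r \<in> \<Union>Ch" using X5 r by blast
      qed
      moreover have "N \<subseteq> \<Union>Ch" using XF X0 by blast
      moreover have "\<one>\<^bsub>A\<^esub> \<notin> \<Union>Ch" using XF by blast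
      ultimately have "\<Union>Ch \<in> F" by (simp add: F_def)
      then show ?thesis by blast
    qed
  qed
  from Zorn_Lemma2[OF this] obtain L where LF: "L \<in> F" and Lmax0: "\<forall>X\<in>F. L \<subseteq> X \<longrightarrow> X = L"
    by blast
  have Lmax: "\<And>X. X \<in> F \<Longrightarrow> L \<subseteq> X \<Longrightarrow> X = L" using Lmax0 by blast
  have lL: "right_ideal A L" and NL: "N \<subseteq> L" and oneL: "\<one>\<^bsub>A\<^esub> \<notin> L" using LF by (auto simp: F_def)
  have "maximal_right_ideal A L"
    unfolding maximal_right_ideal_def
  proof (intro conjI allI impI)
    show "right_ideal A L" by fact
    show "L \<noteq> carrier A" using oneL by auto
  next
    fix M' assume M': "right_ideal A M' \<and> L \<subseteq> M'"
    show "M' = L \<or> M' = carrier A"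
    proof (cases "\<one>\<^bsub>A\<^esub> \<in> M'")
      case True
      have "M' \<subseteq> carrier A" using M' by (auto simp: right_ideal_def A.asg_iff)
      moreover have "carrier A \<subseteq> M'"
      proof
        fix r assume r: "r \<in> carrier A"
        then have "\<one>\<^bsub>A\<^esub> \<otimes>\<^bsub>A\<^esub> r \<in> M'" using M' True unfolding right_ideal_def by blast
        then show "r \<in> M'" using r by simp
      qed
      ultimately show ?thesis by auto
    next
      case False
      then have "M' \<in> F" using M' NL by (auto simp: F_def)
      then show ?thesis using Lmax M' by auto
    qed
  qed
  then have rL: "left_ideal A L" using qd by (auto simp: right_quasi_duo_def)
  define LB where "LB = L \<inter> carrier B"
  have Ls: "L \<subseteq> carrier A" "\<zero>\<^bsub>A\<^esub> \<in> L" "\<And>x y. x \<in> L \<Longrightarrow> y \<in> L \<Longrightarrow> x \<oplus>\<^bsub>A\<^esub> y \<in> L"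
    "\<And>x. x \<in> L \<Longrightarrow> \<ominus>\<^bsub>A\<^esub> x \<in> L" "\<And>r x. r \<in> carrier A \<Longrightarrow> x \<in> L \<Longrightarrow> x \<otimes>\<^bsub>A\<^esub> r \<in> L"
    using lL by (auto simp: right_ideal_def A.asg_iff)
  have "right_ideal B LB"
    unfolding right_ideal_def B.asg_iff
  proof (intro conjI ballI)
    show "LB \<subseteq> carrier B" by (auto simp: LB_def)
    show "\<zero>\<^bsub>B\<^esub> \<in> LB" using Ls(2) zero B.zero_closed unfolding LB_def by simp
  next
    fix x y assume "x \<in> LB" "y \<in> LB"
    then have xy: "x \<in> L" "x \<in> carrier B" "y \<in> L" "y \<in> carrier B" by (auto simp: LB_def)
    have "x \<oplus>\<^bsub>B\<^esub> y \<in> carrier B" using xy by simp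
    moreover have "x \<oplus>\<^bsub>B\<^esub> y \<in> L" using Ls(3)[of x y] opa[of x y] xy by simp
    ultimately show "x \<oplus>\<^bsub>B\<^esub> y \<in> LB" by (simp add: LB_def)
  next
    fix x assume "x \<in> LB"
    then have xy: "x \<in> L" "x \<in> carrier B" by (auto simp: LB_def)
    have "\<ominus>\<^bsub>B\<^esub> x \<in> carrier B" using xy by simp
    moreover have "\<ominus>\<^bsub>B\<^esub> x \<in> L" using Ls(4)[of x] ainv[of x] xy by simp
    ultimately show "\<ominus>\<^bsub>B\<^esub> x \<in> LB" by (simp add: LB_def)
  next
    fix r x assume "r \<in> carrier B" "x \<in> LB"
    then have xy: "x \<in> L" "x \<in> carrier B" "r \<in> carrier B" "r \<in> carrier A" using BA by (auto simp: LB_def)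
    have "x \<otimes>\<^bsub>B\<^esub> r \<in> carrier B" using xy by simp
    moreover have "x \<otimes>\<^bsub>B\<^esub> r \<in> L" using Ls(5)[of r x] ops[of x r] xy by simp
    ultimately show "x \<otimes>\<^bsub>B\<^esub> r \<in> LB" by (simp add: LB_def)
  qed
  moreover have "M \<subseteq> LB" using MN NL Ms(1) unfolding LB_def by blast
  ultimately have "LB = M \<or> LB = carrier B" using maxM by blast
  moreover have "LB \<noteq> carrier B"
  proof
    assume e: "LB = carrier B"
    have "\<one>\<^bsub>B\<^esub> \<in> carrier B" by simp
    then have "\<one>\<^bsub>B\<^esub> \<in> LB" using e by simp
    then have "\<one>\<^bsub>B\<^esub> \<in> L" unfolding LB_def by (rule IntD1)
    then show False using oneL one by simp
  qed
  ultimately have LBM: "LB = M" by blast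
  show "left_ideal B M"
    unfolding left_ideal_def
  proof (intro conjI ballI)
    show "additive_subgroup M B" by fact
  next
    fix r x assume r: "r \<in> carrier B" and x: "x \<in> M"
    have xB: "x \<in> carrier B" using x Ms(1) by auto
    have xL: "x \<in> L" using x LBM unfolding LB_def by blast
    have rA: "r \<in> carrier A" using r BA by blast
    have "r \<otimes>\<^bsub>A\<^esub> x \<in> L" using rL rA xL unfolding left_ideal_def by blast
    moreover have "r \<otimes>\<^bsub>B\<^esub> x \<in> carrier B" using xB r by simp
    ultimately have "r \<otimes>\<^bsub>B\<^esub> x \<in> LB" using ops[OF r xB] unfolding LB_def by simp
    then show "r \<otimes>\<^bsub>B\<^esub> x \<in> M" using LBM by simp
  qed
qed


lemma dp_ainv: assumes "dK \<delta> K" "cK K x" shows "\<ominus>\<^bsub>diffpoly K \<delta>\<^esub> x = - x"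
proof -
  interpret R: ring "diffpoly K \<delta>" by (rule ring_diffpoly[OF assms(1)])
  have x: "x \<in> carrier (diffpoly K \<delta>)" "- x \<in> carrier (diffpoly K \<delta>)"
    using assms(2) cK_uminus[OF assms(2)] by (simp_all add: carrier_diffpoly)
  have "- x \<oplus>\<^bsub>diffpoly K \<delta>\<^esub> x = \<zero>\<^bsub>diffpoly K \<delta>\<^esub>" by (simp add: dp_add dp_zero)
  then show ?thesis using R.minus_equality[OF _ x] by simp
qed

lemma asg_dp: assumes "dK \<delta> K"
  shows "additive_subgroup H (diffpoly K \<delta>) \<longleftrightarrow>
     (\<forall>x\<in>H. cK K x) \<and> 0 \<in> H \<and> (\<forall>x\<in>H. \<forall>y\<in>H. x + y \<in> H) \<and> (\<forall>x\<in>H. - x \<in> H)"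
proof -
  interpret R: ring "diffpoly K \<delta>" by (rule ring_diffpoly[OF assms])
  have ai: "\<And>x. cK K x \<Longrightarrow> \<ominus>\<^bsub>diffpoly K \<delta>\<^esub> x = - x" by (rule dp_ainv[OF assms])
  show ?thesis
  proof
    assume "additive_subgroup H (diffpoly K \<delta>)"
    then have h: "H \<subseteq> Collect (cK K)" "0 \<in> H" "\<forall>x\<in>H. \<forall>y\<in>H. x + y \<in> H" "\<forall>x\<in>H. \<ominus>\<^bsub>diffpoly K \<delta>\<^esub> x \<in> H"
      unfolding R.asg_iff carrier_diffpoly dp_add dp_zero by auto
    have "\<forall>x\<in>H. - x \<in> H"
    proof
      fix x assume x: "x \<in> H"
      then have c: "cK K x" using h(1) by blast
      have "\<ominus>\<^bsub>diffpoly K \<delta>\<^esub> x \<in> H" using h(4) x by blast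
      then show "- x \<in> H" using ai[OF c] by simp
    qed
    then show "(\<forall>x\<in>H. cK K x) \<and> 0 \<in> H \<and> (\<forall>x\<in>H. \<forall>y\<in>H. x + y \<in> H) \<and> (\<forall>x\<in>H. - x \<in> H)"
      using h by blast
  next
    assume h: "(\<forall>x\<in>H. cK K x) \<and> 0 \<in> H \<and> (\<forall>x\<in>H. \<forall>y\<in>H. x + y \<in> H) \<and> (\<forall>x\<in>H. - x \<in> H)"
    have "\<forall>x\<in>H. \<ominus>\<^bsub>diffpoly K \<delta>\<^esub> x \<in> H"
    proof
      fix x assume x: "x \<in> H"
      then have c: "cK K x" using h by blast
      have "- x \<in> H" using h x by blast
      then show "\<ominus>\<^bsub>diffpoly K \<delta>\<^esub> x \<in> H" using ai[OF c] by simp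
    qed
    then show "additive_subgroup H (diffpoly K \<delta>)"
      unfolding R.asg_iff carrier_diffpoly dp_add dp_zero using h by blast
  qed
qed

lemma dK_mono: "dK \<delta> I \<Longrightarrow> J \<subseteq> I \<Longrightarrow> dK \<delta> J"
  by (auto simp: dK_def)

lemma cK_mono: "cK J p \<Longrightarrow> J \<subseteq> I \<Longrightarrow> cK I p"
  by (auto simp: cK_def)

lemma subring_dp: assumes "dK \<delta> I" "J \<subseteq> I"
  shows "subring_nu (diffpoly I \<delta>) (diffpoly J \<delta>)"
  unfolding subring_nu_def
  using ring_diffpoly[OF dK_mono[OF assms]] assms(2)
  by (auto simp: carrier_diffpoly dp_add dp_mul intro: cK_mono)

lemma left_corner_dp: fixes \<delta> :: "'i \<Rightarrow> 'a::ring_1 \<Rightarrow> 'a" assumes dI: "dK \<delta> I" and JI: "J \<subseteq> I"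
  shows "left_corner (diffpoly I \<delta>) (diffpoly J \<delta>)"
proof -
  have dJ: "dK \<delta> J" using dK_mono[OF dI JI] .
  define C :: "('i list \<Rightarrow> 'a) set" where "C = {c. cK I c \<and> (\<forall>w\<in>dp_supp c. \<not> set w \<subseteq> J)}"
  have asgC: "additive_subgroup C (diffpoly I \<delta>)"
    unfolding asg_dp[OF dI]
  proof (intro conjI ballI)
    show "0 \<in> C" by (simp add: C_def cK_zero dp_supp_def)
  next
    fix x y assume "x \<in> C" "y \<in> C" then show "x + y \<in> C"
      using supp_add[of x y] by (auto simp: C_def cK_add)
  next
    fix x assume "x \<in> C" then show "- x \<in> C" by (auto simp: C_def cK_uminus supp_uminus)
  next
    fix x assume "x \<in> C" then show "cK I x" by (simp add: C_def)
  qed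
  have dec: "carrier (diffpoly I \<delta>) = {b \<oplus>\<^bsub>diffpoly I \<delta>\<^esub> c | b c. b \<in> carrier (diffpoly J \<delta>) \<and> c \<in> C}"
  proof (rule Set.set_eqI, rule iffI)
    fix p assume "p \<in> carrier (diffpoly I \<delta>)"
    then have p: "cK I p" by (simp add: carrier_diffpoly)
    define b where "b = (\<lambda>u. if set u \<subseteq> J then p u else 0)"
    define c where "c = (\<lambda>u. if set u \<subseteq> J then 0 else p u)"
    have "p = b + c" by (rule ext) (simp add: b_def c_def)
    moreover have "cK J b"
    proof -
      have s: "dp_supp b \<subseteq> dp_supp p" "\<forall>t\<in>dp_supp b. set t \<subseteq> J"
        by (auto simp: b_def dp_supp_def split: if_splits)
      then show ?thesis using p unfolding cK_def by (blast intro: finite_subset)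
    qed
    moreover have "c \<in> C"
    proof -
      have s: "dp_supp c \<subseteq> dp_supp p" "\<forall>t\<in>dp_supp c. \<not> set t \<subseteq> J"
        by (auto simp: c_def dp_supp_def split: if_splits)
      then show ?thesis using p unfolding cK_def C_def by (blast intro: finite_subset)
    qed
    ultimately show "p \<in> {b \<oplus>\<^bsub>diffpoly I \<delta>\<^esub> c | b c. b \<in> carrier (diffpoly J \<delta>) \<and> c \<in> C}"
      unfolding dp_add carrier_diffpoly by blast
  next
    fix p assume "p \<in> {b \<oplus>\<^bsub>diffpoly I \<delta>\<^esub> c | b c. b \<in> carrier (diffpoly J \<delta>) \<and> c \<in> C}"
    then obtain b c where bc: "p = b + c" "cK J b" "c \<in> C" unfolding dp_add carrier_diffpoly by blast
    have "cK I b" using cK_mono[OF bc(2) JI] .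
    moreover have "cK I c" using bc(3) by (simp add: C_def)
    ultimately show "p \<in> carrier (diffpoly I \<delta>)"
      using bc(1) by (simp add: carrier_diffpoly cK_add)
  qed
  have int: "carrier (diffpoly J \<delta>) \<inter> C = {\<zero>\<^bsub>diffpoly I \<delta>\<^esub>}"
  proof (rule Set.set_eqI, rule iffI)
    fix x assume "x \<in> carrier (diffpoly J \<delta>) \<inter> C"
    then have "dp_supp x = {}" by (auto simp: carrier_diffpoly C_def cK_def)
    then have "x = 0" by (auto simp: dp_supp_def fun_eq_iff)
    then show "x \<in> {\<zero>\<^bsub>diffpoly I \<delta>\<^esub>}" by (simp add: dp_zero)
  next
    fix x assume "x \<in> {\<zero>\<^bsub>diffpoly I \<delta>\<^esub>}"
    then have "x = 0" by (simp add: dp_zero)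
    then show "x \<in> carrier (diffpoly J \<delta>) \<inter> C" by (simp add: carrier_diffpoly C_def cK_zero dp_supp_def)
  qed
  have BC: "\<forall>b\<in>carrier (diffpoly J \<delta>). \<forall>c\<in>C. b \<otimes>\<^bsub>diffpoly I \<delta>\<^esub> c \<in> C"
  proof (intro ballI)
    fix b c assume b: "b \<in> carrier (diffpoly J \<delta>)" and c: "c \<in> C"
    have bI: "cK I b" using b cK_mono[OF _ JI] by (simp add: carrier_diffpoly)
    have cI: "cK I c" using c by (simp add: C_def)
    have "b \<otimes>\<^bsub>diffpoly I \<delta>\<^esub> c = Phi \<delta> b c" by (simp add: dp_mul dp_mult_Phi[OF dI bI cI])
    moreover have "cK I (Phi \<delta> b c)" by (rule cK_Phi[OF dI bI cI])
    moreover have "dp_supp (Phi \<delta> b c) \<subseteq> {w. \<not> set w \<subseteq> J}"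
    proof -
      have "\<And>t. t \<in> dp_supp b \<Longrightarrow> dp_supp (Xw \<delta> t c) \<subseteq> {w. \<not> set w \<subseteq> J}"
      proof -
        fix t assume "t \<in> dp_supp b"
        then have "set t \<subseteq> I" using bI by (auto simp: cK_def)
        then show "dp_supp (Xw \<delta> t c) \<subseteq> {w. \<not> set w \<subseteq> J}"
          by (rule supp_Xw_W[OF dI]) (use c in \<open>auto simp: C_def\<close>)
      qed
      then show ?thesis using supp_Phi[of \<delta> b c] by blast
    qed
    ultimately show "b \<otimes>\<^bsub>diffpoly I \<delta>\<^esub> c \<in> C" by (auto simp: C_def)
  qed
  show ?thesis
    unfolding left_corner_def direct_complement_def
  proof (intro conjI exI[of _ C])
    show "subring_nu (diffpoly I \<delta>) (diffpoly J \<delta>)" by (rule subring_dp[OF dI JI])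
  qed (rule asgC, rule dec, rule int, use BC in blast)
qed

lemma Phi_monom0: "Phi \<delta> (dp_monom [] a) r = smult a r"
proof -
  have "Phi \<delta> (dp_monom [] a) r = (\<Sum>t\<in>{[]}. smult (dp_monom [] a t) (Xw \<delta> t r))"
    by (rule Phi_superset) (auto simp: dp_supp_def dp_monom_def)
  then show ?thesis by (simp add: dp_monom_def)
qed

lemma right_corner_dp: fixes \<delta> :: "'i \<Rightarrow> 'a::ring_1 \<Rightarrow> 'a" assumes dI: "dK \<delta> I" and JI: "J \<subseteq> I"
  shows "right_corner (diffpoly I \<delta>) (diffpoly J \<delta>)"
proof -
  have dJ: "dK \<delta> J" using dK_mono[OF dI JI] .
  define C :: "('i list \<Rightarrow> 'a) set" where "C = {c. cK I c \<and> (\<forall>w\<in>dp_supp (rho \<delta> c). \<not> set w \<subseteq> J)}"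
  have asgC: "additive_subgroup C (diffpoly I \<delta>)"
    unfolding asg_dp[OF dI]
  proof (intro conjI ballI)
    show "0 \<in> C" by (simp add: C_def cK_zero rho_zero dp_supp_def)
  next
    fix x y assume "x \<in> C" "y \<in> C" then show "x + y \<in> C"
      using supp_add[of "rho \<delta> x" "rho \<delta> y"] by (auto simp: C_def cK_add rho_add[OF dI])
  next
    fix x assume x: "x \<in> C"
    then have xI: "cK I x" by (simp add: C_def)
    have "rho \<delta> (0 - x) = rho \<delta> 0 - rho \<delta> x" by (rule rho_diff[OF dI cK_zero xI])
    then have "rho \<delta> (- x) = - rho \<delta> x" by (simp add: rho_zero)
    then show "- x \<in> C" using x by (auto simp: C_def cK_uminus supp_uminus)
  next
    fix x assume "x \<in> C" then show "cK I x" by (simp add: C_def)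
  qed
  have dec: "carrier (diffpoly I \<delta>) = {b \<oplus>\<^bsub>diffpoly I \<delta>\<^esub> c | b c. b \<in> carrier (diffpoly J \<delta>) \<and> c \<in> C}"
  proof (rule Set.set_eqI, rule iffI)
    fix p assume "p \<in> carrier (diffpoly I \<delta>)"
    then have p: "cK I p" by (simp add: carrier_diffpoly)
    define f where "f = rho \<delta> p"
    have f: "cK I f" unfolding f_def by (rule cK_rho[OF p])
    define fJ where "fJ = (\<lambda>u. if set u \<subseteq> J then f u else 0)"
    have fJ: "cK J fJ" using f by (auto simp: cK_def fJ_def dp_supp_def intro: finite_subset)
    define b where "b = lam \<delta> fJ"
    have bJ: "cK J b" unfolding b_def by (rule cK_lam[OF dJ fJ])
    have bI: "cK I b" using bJ JI by (rule cK_mono)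
    define c where "c = p - b"
    have cI: "cK I c" unfolding c_def by (rule cK_diff[OF p bI])
    have "rho \<delta> c = f - rho \<delta> b" unfolding c_def f_def by (rule rho_diff[OF dI p bI])
    also have "rho \<delta> b = fJ" unfolding b_def by (rule rho_lam[OF dI cK_mono[OF fJ JI]])
    finally have "rho \<delta> c = (\<lambda>u. if set u \<subseteq> J then 0 else f u)" by (auto simp: fJ_def fun_eq_iff)
    then have "c \<in> C" using cI by (auto simp: C_def dp_supp_def)
    moreover have "p = b + c" by (simp add: c_def)
    ultimately show "p \<in> {b \<oplus>\<^bsub>diffpoly I \<delta>\<^esub> c | b c. b \<in> carrier (diffpoly J \<delta>) \<and> c \<in> C}"
      using bJ by (auto simp: dp_add carrier_diffpoly)
  next
    fix p assume "p \<in> {b \<oplus>\<^bsub>diffpoly I \<delta>\<^esub> c | b c. b \<in> carrier (diffpoly J \<delta>) \<and> c \<in> C}"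
    then obtain b c where bc: "p = b + c" "cK J b" "c \<in> C" unfolding dp_add carrier_diffpoly by blast
    have "cK I b" using cK_mono[OF bc(2) JI] .
    moreover have "cK I c" using bc(3) by (simp add: C_def)
    ultimately show "p \<in> carrier (diffpoly I \<delta>)"
      using bc(1) by (simp add: carrier_diffpoly cK_add)
  qed
  have int: "carrier (diffpoly J \<delta>) \<inter> C = {\<zero>\<^bsub>diffpoly I \<delta>\<^esub>}"
  proof (rule Set.set_eqI, rule iffI)
    fix x assume x: "x \<in> carrier (diffpoly J \<delta>) \<inter> C"
    then have xJ: "cK J x" and xI: "cK I x" by (auto simp: carrier_diffpoly C_def)
    have "cK J (rho \<delta> x)" by (rule cK_rho[OF xJ])
    then have "dp_supp (rho \<delta> x) = {}" using x by (auto simp: C_def cK_def)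
    then have "rho \<delta> x = 0" by (auto simp: dp_supp_def fun_eq_iff)
    then have "x = 0" by (rule rho_inj[OF xI])
    then show "x \<in> {\<zero>\<^bsub>diffpoly I \<delta>\<^esub>}" by (simp add: dp_zero)
  next
    fix x assume "x \<in> {\<zero>\<^bsub>diffpoly I \<delta>\<^esub>}"
    then have "x = 0" by (simp add: dp_zero)
    then show "x \<in> carrier (diffpoly J \<delta>) \<inter> C" by (simp add: carrier_diffpoly C_def cK_zero rho_zero dp_supp_def)
  qed
  have CB: "\<forall>b\<in>carrier (diffpoly J \<delta>). \<forall>c\<in>C. c \<otimes>\<^bsub>diffpoly I \<delta>\<^esub> b \<in> C"
  proof (intro ballI)
    fix b c assume b: "b \<in> carrier (diffpoly J \<delta>)" and c: "c \<in> C"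
    have bJ: "cK J b" using b by (simp add: carrier_diffpoly)
    have bI: "cK I b" using bJ JI by (rule cK_mono)
    have cI: "cK I c" using c by (simp add: C_def)
    define f where "f = rho \<delta> c"
    have f: "cK I f" unfolding f_def by (rule cK_rho[OF cI])
    have fnJ: "\<And>w. w \<in> dp_supp f \<Longrightarrow> \<not> set w \<subseteq> J" using c by (simp add: C_def f_def)
    have fI: "\<And>w. w \<in> dp_supp f \<Longrightarrow> set w \<subseteq> I" using f by (simp add: cK_def)
    have lI: "cK I (lam \<delta> f)" by (rule cK_lam[OF dI f])
    have "rho \<delta> (lam \<delta> f - c) = rho \<delta> (lam \<delta> f) - rho \<delta> c" by (rule rho_diff[OF dI lI cI])
    also have "\<dots> = 0" using rho_lam[OF dI f] unfolding f_def by simp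
    finally have "lam \<delta> f - c = 0" by (rule rho_inj[OF cK_diff[OF lI cI]])
    then have cl: "c = lam \<delta> f" by simp
    have mon: "\<And>w. w \<in> dp_supp f \<Longrightarrow> cK I (Xw \<delta> w (dp_monom [] (f w)))"
      using fI by (auto intro!: cK_Xw[OF dI] cK_monom)
    have "Phi \<delta> c b = (\<Sum>w\<in>dp_supp f. Phi \<delta> (Xw \<delta> w (dp_monom [] (f w))) b)"
      unfolding cl lam_def by (rule Phi_sum) (use mon in \<open>simp add: cK_def\<close>)
    also have "\<dots> = (\<Sum>w\<in>dp_supp f. Xw \<delta> w (smult (f w) b))"
    proof (rule sum.cong[OF refl])
      fix w assume "w \<in> dp_supp f"
      then have wI: "set w \<subseteq> I" using fI by blast
      have fm: "finite (dp_supp (dp_monom [] (f w)))"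
        by (rule finite_subset[of _ "{[]}"]) (auto simp: dp_supp_def dp_monom_def)
      show "Phi \<delta> (Xw \<delta> w (dp_monom [] (f w))) b = Xw \<delta> w (smult (f w) b)"
        by (simp only: Phi_Xw[OF dI wI fm] Phi_monom0)
    qed
    finally have Pe: "Phi \<delta> c b = (\<Sum>w\<in>dp_supp f. Xw \<delta> w (smult (f w) b))" .
    have sm: "\<And>w. cK J (smult (f w) b)" using bJ by (rule cK_smult)
    have "rho \<delta> (Phi \<delta> c b) = (\<Sum>w\<in>dp_supp f. rho \<delta> (Xw \<delta> w (smult (f w) b)))"
      unfolding Pe by (rule rho_sum[OF dI]) (use fI in \<open>auto intro!: cK_Xw[OF dI] cK_mono[OF sm JI]\<close>)
    also have "\<dots> = (\<Sum>w\<in>dp_supp f. shw w (rho \<delta> (smult (f w) b)))"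
      by (rule sum.cong[OF refl]) (use fI in \<open>simp add: rho_Xw[OF dI] cK_mono[OF sm JI]\<close>)
    finally have re: "rho \<delta> (Phi \<delta> c b) = (\<Sum>w\<in>dp_supp f. shw w (rho \<delta> (smult (f w) b)))" .
    have "dp_supp (rho \<delta> (Phi \<delta> c b)) \<subseteq> {u. \<not> set u \<subseteq> J}"
    proof
      fix u assume "u \<in> dp_supp (rho \<delta> (Phi \<delta> c b))"
      then have "u \<in> dp_supp (\<Sum>w\<in>dp_supp f. shw w (rho \<delta> (smult (f w) b)))" using re by simp
      then have "u \<in> (\<Union>w\<in>dp_supp f. dp_supp (shw w (rho \<delta> (smult (f w) b))))"
        using supp_sum[of "\<lambda>w. shw w (rho \<delta> (smult (f w) b))" "dp_supp f"] by blast
      then obtain w where w: "w \<in> dp_supp f" "u \<in> dp_supp (shw w (rho \<delta> (smult (f w) b)))"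
        by blast
      then obtain v where "u = w @ v" using shw_supp[of w _ u] by (auto simp: dp_supp_def)
      then show "u \<in> {u. \<not> set u \<subseteq> J}" using fnJ[OF w(1)] by auto
    qed
    moreover have "c \<otimes>\<^bsub>diffpoly I \<delta>\<^esub> b = Phi \<delta> c b" by (simp add: dp_mul dp_mult_Phi[OF dI cI bI])
    moreover have "cK I (Phi \<delta> c b)" by (rule cK_Phi[OF dI cI bI])
    ultimately show "c \<otimes>\<^bsub>diffpoly I \<delta>\<^esub> b \<in> C" by (auto simp: C_def)
  qed
  show ?thesis
    unfolding right_corner_def direct_complement_def
  proof (intro conjI exI[of _ C])
    show "subring_nu (diffpoly I \<delta>) (diffpoly J \<delta>)" by (rule subring_dp[OF dI JI])
  qed (rule asgC, rule dec, rule int, use CB in blast)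
qed


theorem lemma5p1:
  fixes I :: "'i set" and \<delta> :: "'i \<Rightarrow> 'a::ring_1 \<Rightarrow> 'a"
  assumes "I \<noteq> {}" and "countable I"
    and "\<forall>i\<in>I. is_derivation (\<delta> i)"
  shows "(\<forall>J\<subseteq>I. right_corner (diffpoly I \<delta>) (diffpoly J \<delta>) \<and> left_corner (diffpoly I \<delta>) (diffpoly J \<delta>))
    \<and> (left_quasi_duo (diffpoly I \<delta>) \<longrightarrow> (\<forall>J\<subseteq>I. left_quasi_duo (diffpoly J \<delta>)))
    \<and> (right_quasi_duo (diffpoly I \<delta>) \<longrightarrow> (\<forall>J\<subseteq>I. right_quasi_duo (diffpoly J \<delta>)))"
proof -
  have dI: "dK \<delta> I" using assms(3) by (simp add: dK_def)
  have one: "\<And>J. \<one>\<^bsub>diffpoly J \<delta>\<^esub> = \<one>\<^bsub>diffpoly I \<delta>\<^esub>" by (simp add: dp_one)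
  have zero: "\<And>J. \<zero>\<^bsub>diffpoly J \<delta>\<^esub> = \<zero>\<^bsub>diffpoly I \<delta>\<^esub>" by (simp add: dp_zero)
  have c1: "\<forall>J\<subseteq>I. right_corner (diffpoly I \<delta>) (diffpoly J \<delta>) \<and> left_corner (diffpoly I \<delta>) (diffpoly J \<delta>)"
    using right_corner_dp[OF dI] left_corner_dp[OF dI] by blast
  have c2: "left_quasi_duo (diffpoly I \<delta>) \<longrightarrow> (\<forall>J\<subseteq>I. left_quasi_duo (diffpoly J \<delta>))"
  proof (intro impI allI)
    fix J assume q: "left_quasi_duo (diffpoly I \<delta>)" and JI: "J \<subseteq> I"
    then show "left_quasi_duo (diffpoly J \<delta>)"
      using qd_left[OF ring_diffpoly[OF dI] subring_dp[OF dI JI] one zero right_corner_dp[OF dI JI] q] by blast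
  qed
  have c3: "right_quasi_duo (diffpoly I \<delta>) \<longrightarrow> (\<forall>J\<subseteq>I. right_quasi_duo (diffpoly J \<delta>))"
  proof (intro impI allI)
    fix J assume q: "right_quasi_duo (diffpoly I \<delta>)" and JI: "J \<subseteq> I"
    then show "right_quasi_duo (diffpoly J \<delta>)"
      using qd_right[OF ring_diffpoly[OF dI] subring_dp[OF dI JI] one zero left_corner_dp[OF dI JI] q] by blast
  qed
  show ?thesis using c1 c2 c3 by blast
qed

end
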